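(* Let $S \subset \mathbb{P}^3$ be a surface of degree $4$ defined over $\mathbb{F}_4$, irreducible over $\mathbb{F}_4$, containing no $\mathbb{F}_4$-line, and such that every $\mathbb{F}_4$-rational point of $S$ is nonsingular on $S$. For an $\mathbb{F}_4$-plane $H$ let $t(H)=\#\{P\in S(\mathbb{F}_4)\mid H=T_PS\}$. If there exist two distinct $\mathbb{F}_4$-planes $H_1 \neq H_2$ with $t(H_1)=t(H_2)=5$, then $H_1\cap H_2\cap S(\mathbb{F}_4)=\emptyset$ and $N_4(S) \leq 49$.
   Context: $S(\mathbb{F}_4)$ is the set of $\mathbb{F}_4$-rational points of $S$, $N_4(S)$ its cardinality. For a nonsingular point $P$ of $S$, $T_P S$ denotes the embedded tangent plane to $S$ at $P$. An $\mathbb{F}_4$-plane (resp. line) is a plane (resp. line) defined over $\mathbb{F}_4$. *)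

theory Defs
  imports "HOL-Library.Poly_Mapping" "HOL-Library.Numeral_Type"
    "HOL-Computational_Algebra.Factorial_Ring" "HOL-Algebra.Algebraic_Closure_Type"
begin

text \<open>Homogeneous coordinates of P^3 are indexed by the 4-element type 4.
  A polynomial in x_0..x_3 with coefficients in k is a finitely supported map
  from monomials (exponent vectors 4 =>0 nat) to k; this type is a commutative ring.\<close>

type_synonym 'k mpoly4 = "(4 \<Rightarrow>\<^sub>0 nat) \<Rightarrow>\<^sub>0 'k"

definition homogeneous_of_degree :: "'k::zero mpoly4 \<Rightarrow> nat \<Rightarrow> bool" where
  "homogeneous_of_degree f d \<longleftrightarrow> (\<forall>m\<in>Poly_Mapping.keys f. (\<Sum>i\<in>UNIV. Poly_Mapping.lookup m i) = d)"

definition peval :: "('k::zero \<Rightarrow> 'r::comm_ring_1) \<Rightarrow> 'k mpoly4 \<Rightarrow> (4 \<Rightarrow> 'r) \<Rightarrow> 'r" where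
  "peval emb f x = (\<Sum>m\<in>Poly_Mapping.keys f. emb (Poly_Mapping.lookup f m) * (\<Prod>i\<in>UNIV. x i ^ Poly_Mapping.lookup m i))"

definition eval4 :: "'k::comm_ring_1 mpoly4 \<Rightarrow> (4 \<Rightarrow> 'k) \<Rightarrow> 'k" where
  "eval4 f x = peval id f x"

definition pdiff_eval :: "'k::comm_ring_1 mpoly4 \<Rightarrow> 4 \<Rightarrow> (4 \<Rightarrow> 'k) \<Rightarrow> 'k" where
  "pdiff_eval f i x = (\<Sum>m\<in>Poly_Mapping.keys f. Poly_Mapping.lookup f m * of_nat (Poly_Mapping.lookup m i) * x i ^ (Poly_Mapping.lookup m i - 1)
        * (\<Prod>j\<in>UNIV - {i}. x j ^ Poly_Mapping.lookup m j))"

definition grad :: "'k::comm_ring_1 mpoly4 \<Rightarrow> (4 \<Rightarrow> 'k) \<Rightarrow> (4 \<Rightarrow> 'k)" where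
  "grad f x = (\<lambda>i. pdiff_eval f i x)"

definition proj_pt :: "(4 \<Rightarrow> 'k::field) \<Rightarrow> (4 \<Rightarrow> 'k) set" where
  "proj_pt x = {(\<lambda>i. c * x i) | c. c \<noteq> 0}"

definition lin :: "(4 \<Rightarrow> 'k::comm_ring_1) \<Rightarrow> (4 \<Rightarrow> 'k) \<Rightarrow> 'k" where
  "lin a x = (\<Sum>i\<in>UNIV. a i * x i)"

definition rat_points :: "'k::field mpoly4 \<Rightarrow> (4 \<Rightarrow> 'k) set set" where
  "rat_points f = {proj_pt x | x. x \<noteq> (\<lambda>_. 0) \<and> eval4 f x = 0}"

text \<open>A k-plane H is
  represented by its (projective) coefficient vector [a], a nonzero.\<close>
definition nonsingular_at :: "'k::field mpoly4 \<Rightarrow> (4 \<Rightarrow> 'k) \<Rightarrow> bool" where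
  "nonsingular_at f x \<longleftrightarrow> grad f x \<noteq> (\<lambda>_. 0)"

definition tangent_plane :: "'k::field mpoly4 \<Rightarrow> (4 \<Rightarrow> 'k) \<Rightarrow> (4 \<Rightarrow> 'k) set" where
  "tangent_plane f x = proj_pt (grad f x)"

definition tcount :: "'k::field mpoly4 \<Rightarrow> (4 \<Rightarrow> 'k) \<Rightarrow> nat" where
  "tcount f a = card {proj_pt x | x. x \<noteq> (\<lambda>_. 0) \<and> eval4 f x = 0 \<and> tangent_plane f x = proj_pt a}"

text \<open>S contains the k-line through the distinct k-points [x],[y]: the line (over the
  algebraic closure) lies on S, i.e. f(s x + t y) = 0 for all s,t in the algebraic closure.\<close>
definition contains_rat_line :: "'k::field mpoly4 \<Rightarrow> bool" where
  "contains_rat_line f \<longleftrightarrow> (\<exists>x y. x \<noteq> (\<lambda>_. 0) \<and> y \<noteq> (\<lambda>_. 0) \<and> proj_pt x \<noteq> proj_pt y \<and>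
     (\<forall>s t :: 'k alg_closure. peval to_ac f (\<lambda>i. s * to_ac (x i) + t * to_ac (y i)) = 0))"

end

theory Submission
  imports Defs "HOL-Computational_Algebra.Polynomial" "HOL-Library.Cardinality"
begin

definition PEg :: "((4 \<Rightarrow>\<^sub>0 nat) \<Rightarrow> 'r::comm_ring_1) \<Rightarrow> (4 \<Rightarrow>\<^sub>0 nat) set \<Rightarrow> (4 \<Rightarrow> 'r) \<Rightarrow> (4 \<Rightarrow> 'r) \<Rightarrow> 'r poly"
  where "PEg c K xx yy = (\<Sum>m\<in>K. [:c m:] * (\<Prod>i\<in>UNIV. [:xx i, yy i:] ^ Poly_Mapping.lookup m i))"

lemma poly_PEg: "poly (PEg c K xx yy) u = (\<Sum>m\<in>K. c m * (\<Prod>i\<in>UNIV. (xx i + u * yy i) ^ Poly_Mapping.lookup m i))"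
  by (simp add: PEg_def poly_sum poly_prod)


lemma degree_lin_pow: "degree ([:a, b:] ^ k) \<le> k"
proof -
  have "degree ([:a, b:] ^ k) \<le> degree [:a, b:] * k" by (rule degree_power_le)
  also have "\<dots> \<le> 1 * k" by (intro mult_right_mono) (auto simp: degree_pCons_le)
  finally show ?thesis by simp
qed

lemma degree_prod_lin:
  "degree (\<Prod>i\<in>(UNIV::4 set). [:xx i, yy i:] ^ Poly_Mapping.lookup m i) \<le> (\<Sum>i\<in>UNIV. Poly_Mapping.lookup m i)"
proof -
  have "degree (\<Prod>i\<in>(UNIV::4 set). [:xx i, yy i:] ^ Poly_Mapping.lookup m i) \<le> (\<Sum>i\<in>UNIV. degree ([:xx i, yy i:] ^ Poly_Mapping.lookup m i))"
    using degree_prod_sum_le[of "UNIV::4 set" "\<lambda>i. [:xx i, yy i:] ^ Poly_Mapping.lookup m i"] by (simp add: o_def)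
  also have "\<dots> \<le> (\<Sum>i\<in>UNIV. Poly_Mapping.lookup m i)"
    by (intro sum_mono degree_lin_pow)
  finally show ?thesis .
qed

lemma degree_PEg:
  assumes "finite K" "\<forall>m\<in>K. (\<Sum>i\<in>UNIV. Poly_Mapping.lookup m i) = 4"
  shows "degree (PEg c K xx yy) \<le> 4"
  unfolding PEg_def
proof (rule degree_sum_le)
  fix m assume m: "m \<in> K"
  have "degree ([:c m:] * (\<Prod>i\<in>UNIV. [:xx i, yy i:] ^ Poly_Mapping.lookup m i)) \<le> degree [:c m:] + degree (\<Prod>i\<in>UNIV. [:xx i, yy i:] ^ Poly_Mapping.lookup m i)"
    by (rule degree_mult_le)
  also have "\<dots> \<le> 0 + (\<Sum>i\<in>UNIV. Poly_Mapping.lookup m i)"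
    using degree_prod_lin[of xx yy m] by simp
  finally show "degree ([:c m:] * (\<Prod>i\<in>UNIV. [:xx i, yy i:] ^ Poly_Mapping.lookup m i)) \<le> 4" using assms m by simp
qed (use assms in simp)

lemma coeff_mult_top:
  assumes "degree p \<le> a" "degree q \<le> b"
  shows "coeff (p * q) (a + b) = coeff p a * coeff q b"
proof -
  have "coeff (p * q) (a + b) = (\<Sum>i\<le>a+b. coeff p i * coeff q (a + b - i))" by (rule coeff_mult)
  also have "\<dots> = (\<Sum>i\<in>{a}. coeff p i * coeff q (a + b - i))"
  proof (rule sum.mono_neutral_right)
    show "\<forall>i\<in>{..a + b} - {a}. coeff p i * coeff q (a + b - i) = 0"
    proof
      fix i assume "i \<in> {..a + b} - {a}"
      then have "i < a \<or> i > a" by auto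
      then show "coeff p i * coeff q (a + b - i) = 0"
      proof
        assume "i < a" then have "coeff q (a+b-i) = 0" using assms(2) by (intro coeff_eq_0) auto
        then show ?thesis by simp
      next
        assume "i > a" then have "coeff p i = 0" using assms(1) by (intro coeff_eq_0) auto
        then show ?thesis by simp
      qed
    qed
  qed auto
  finally show ?thesis by simp
qed

lemma coeff_prod_top:
  assumes "finite A" "\<forall>i\<in>A. degree (p i) \<le> d i"
  shows "coeff (\<Prod>i\<in>A. p i) (\<Sum>i\<in>A. d i) = (\<Prod>i\<in>A. coeff (p i) (d i))"
  using assms
proof (induction A rule: finite_induct)
  case empty then show ?case by simp
next
  case (insert x F)
  have dF: "degree (\<Prod>i\<in>F. p i) \<le> (\<Sum>i\<in>F. d i)"
  proof -
    have "degree (\<Prod>i\<in>F. p i) \<le> (\<Sum>i\<in>F. degree (p i))" using degree_prod_sum_le[OF insert(1)] by (simp add: o_def)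
    also have "\<dots> \<le> (\<Sum>i\<in>F. d i)" using insert(4) by (intro sum_mono) auto
    finally show ?thesis .
  qed
  have "coeff (\<Prod>i\<in>insert x F. p i) (\<Sum>i\<in>insert x F. d i) = coeff (p x * (\<Prod>i\<in>F. p i)) (d x + (\<Sum>i\<in>F. d i))"
    using insert by simp
  also have "\<dots> = coeff (p x) (d x) * coeff (\<Prod>i\<in>F. p i) (\<Sum>i\<in>F. d i)"
    using insert(4) dF by (intro coeff_mult_top) auto
  also have "\<dots> = (\<Prod>i\<in>insert x F. coeff (p i) (d i))" using insert by simp
  finally show ?case .
qed

lemma coeff_power_top:
  assumes "degree p \<le> d"
  shows "coeff (p ^ n) (d * n) = coeff p d ^ n"
proof -
  have "coeff (\<Prod>i\<in>{..<n}. p) (\<Sum>i\<in>{..<n}. d) = (\<Prod>i\<in>{..<n}. coeff p d)"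
    using assms by (intro coeff_prod_top) auto
  then show ?thesis by (simp add: mult.commute)
qed

lemma coeff4_PEg:
  assumes "\<forall>m\<in>K. (\<Sum>i\<in>UNIV. Poly_Mapping.lookup m i) = 4"
  shows "coeff (PEg c K xx yy) 4 = (\<Sum>m\<in>K. c m * (\<Prod>i\<in>UNIV. yy i ^ Poly_Mapping.lookup m i))"
proof -
  have "coeff (\<Prod>i\<in>UNIV. [:xx i, yy i:] ^ Poly_Mapping.lookup m i) 4 = (\<Prod>i\<in>UNIV. yy i ^ Poly_Mapping.lookup m i)"
    if m: "m \<in> K" for m
  proof -
    have "coeff (\<Prod>i\<in>UNIV. [:xx i, yy i:] ^ Poly_Mapping.lookup m i) (\<Sum>i\<in>UNIV. 1 * Poly_Mapping.lookup m i)
        = (\<Prod>i\<in>UNIV. coeff ([:xx i, yy i:] ^ Poly_Mapping.lookup m i) (1 * Poly_Mapping.lookup m i))"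
    proof (rule coeff_prod_top)
      show "\<forall>i\<in>UNIV. degree ([:xx i, yy i:] ^ Poly_Mapping.lookup m i) \<le> 1 * Poly_Mapping.lookup m i"
      proof
        fix i
        have "degree ([:xx i, yy i:] ^ Poly_Mapping.lookup m i) \<le> degree [:xx i, yy i:] * Poly_Mapping.lookup m i"
          by (rule degree_power_le)
        also have "\<dots> \<le> 1 * Poly_Mapping.lookup m i"
          by (intro mult_right_mono) (auto simp: degree_pCons_le)
        finally show "degree ([:xx i, yy i:] ^ Poly_Mapping.lookup m i) \<le> 1 * Poly_Mapping.lookup m i" .
      qed
    qed simp
    also have "\<dots> = (\<Prod>i\<in>UNIV. yy i ^ Poly_Mapping.lookup m i)"
      by (intro prod.cong refl, subst coeff_power_top) (auto simp: degree_pCons_le)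
    finally show ?thesis using assms m by simp
  qed
  then show ?thesis by (simp add: PEg_def coeff_sum)
qed

lemma coeff0_PEg:
  "coeff (PEg c K xx yy) 0 = (\<Sum>m\<in>K. c m * (\<Prod>i\<in>UNIV. xx i ^ Poly_Mapping.lookup m i))"
  by (simp add: poly_0_coeff_0[symmetric] poly_PEg)

lemma pderiv_sum: "pderiv (sum f A) = (\<Sum>x\<in>A. pderiv (f x))"
  by (induct A rule: infinite_finite_induct) (auto simp: pderiv_add)

lemma poly_pderiv_lin_pow0:
  fixes a b :: "'r::field"
  shows "poly (pderiv ([:a, b:] ^ k)) 0 = of_nat k * a ^ (k - 1) * b"
  by (simp add: pderiv_power pderiv_pCons)

lemma pderiv_const_mult: "pderiv ([:c:] * p) = smult c (pderiv p)"
  by (simp add: pderiv_smult)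

lemma coeff1_PEg:
  fixes c :: "(4 \<Rightarrow>\<^sub>0 nat) \<Rightarrow> 'r::field"
  shows "coeff (PEg c K xx yy) 1 = (\<Sum>m\<in>K. c m * (\<Sum>i\<in>UNIV. of_nat (Poly_Mapping.lookup m i) * xx i ^ (Poly_Mapping.lookup m i - 1) * yy i *
       (\<Prod>j\<in>UNIV - {i}. xx j ^ Poly_Mapping.lookup m j)))"
proof -
  have c1: "coeff p 1 = poly (pderiv p) 0" for p :: "'r poly"
    by (simp add: poly_0_coeff_0 coeff_pderiv)
  have pd: "pderiv (PEg c K xx yy) = (\<Sum>m\<in>K. smult (c m) (\<Sum>i\<in>UNIV. (\<Prod>j\<in>UNIV - {i}. [:xx j, yy j:] ^ Poly_Mapping.lookup m j) *
        pderiv ([:xx i, yy i:] ^ Poly_Mapping.lookup m i)))"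
    unfolding PEg_def pderiv_sum pderiv_const_mult pderiv_prod by (rule refl)
  show ?thesis
    unfolding c1 pd poly_sum poly_smult poly_mult poly_prod poly_power poly_pderiv_lin_pow0
    by (simp add: mult_ac sum_distrib_left)
qed

lemma field_card4_pow3:
  fixes x :: "'k::{field,finite}"
  assumes c: "CARD('k) = 4" and x: "x \<noteq> 0"
  shows "x ^ 3 = 1"
proof -
  let ?N = "UNIV - {0::'k}"
  have cN: "card ?N = 3" using c by (simp add: card_Diff_singleton)
  have bij: "bij_betw ((*) x) ?N ?N"
    by (rule bij_betwI[where g="(*) (inverse x)"]) (use x in \<open>auto simp: field_simps\<close>)
  have "(\<Prod>y\<in>?N. y) = (\<Prod>y\<in>?N. x * y)"
    using prod.reindex_bij_betw[OF bij, of id] by simp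
  also have "\<dots> = x ^ card ?N * (\<Prod>y\<in>?N. y)" by (simp add: prod.distrib)
  finally have "1 * (\<Prod>y\<in>?N. y) = x ^ 3 * (\<Prod>y\<in>?N. y)" using cN by simp
  moreover have "(\<Prod>y\<in>?N. y) \<noteq> 0" by (simp add: prod_zero_iff)
  ultimately show ?thesis by (metis mult_right_cancel)
qed

lemma field_card4_pow4:
  fixes x :: "'k::{field,finite}"
  assumes c: "CARD('k) = 4"
  shows "x ^ 4 = x"
proof (cases "x = 0")
  case False
  then have "x ^ 3 = 1" using field_card4_pow3[OF c] by blast
  then have "x * x * x = 1" by (simp add: eval_nat_numeral mult.assoc)
  then have "x ^ 4 = (x * x * x) * x" by (simp add: eval_nat_numeral mult_ac)
  then show ?thesis using \<open>x * x * x = 1\<close> by simp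
qed simp

lemma field_card4_char2:
  assumes c: "CARD('k::{field,finite}) = 4"
  shows "(1::'k) + 1 = 0"
proof (rule ccontr)
  assume t: "(1::'k) + 1 \<noteq> 0"
  then have t2: "(2::'k) \<noteq> 0" by simp
  have "(2::'k) ^ 3 = 1" using field_card4_pow3[OF c t2] .
  then have e8: "(8::'k) = 1" by simp
  have "(7::'k) = 8 - 1" by simp
  then have e7: "(7::'k) = 0" using e8 by simp
  show False
  proof (cases "(3::'k) = 0")
    case True
    have "(7::'k) = 2 * 3 + 1" by simp
    then have "(1::'k) = 0" using e7 True by simp
    then show False by simp
  next
    case False
    have "(3::'k) ^ 3 = 1" using field_card4_pow3[OF c False] .
    then have "(27::'k) = 1" by simp
    then have "(27::'k) - 4 * 7 = 1 - 0" using e7 by simp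
    then have "(-1::'k) = 1" by simp
    then have "(1::'k) + 1 = 0" by (metis add.right_inverse)
    then show False using t by simp
  qed
qed

locale F4 =
  fixes om :: "'k::{field,finite}"
  assumes card4: "CARD('k) = 4" and omsq: "om * om = om + 1"
begin

lemma two[simp]: "(1::'k) + 1 = 0" using field_card4_char2[OF card4] .
lemma two0[simp]: "(2::'k) = 0" using two by (metis one_add_one)
lemma xx[simp]: "(x::'k) + x = 0"
  using two by (metis distrib_left mult.right_neutral mult_zero_right)
lemma xxy[simp]: "(x::'k) + (x + y) = y" by (simp add: add.assoc[symmetric])
lemma negk[simp]: "- (x::'k) = x" using xx by (metis add_eq_0_iff)
lemma diffk[simp]: "(x::'k) - y = x + y" by (metis diff_conv_add_uminus negk)
lemma add0_iff: "(x::'k) + y = 0 \<longleftrightarrow> x = y" by (metis xx add_eq_0_iff negk)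
lemma wwx[simp]: "om * (om * x) = om * x + x" by (metis omsq distrib_right mult.assoc mult_1)
lemma pow4: "(x::'k) ^ 4 = x" using field_card4_pow4[OF card4] .
lemma pow3: "(x::'k) \<noteq> 0 \<Longrightarrow> x ^ 3 = 1" using field_card4_pow3[OF card4] .
lemma om0: "om \<noteq> 0" using omsq by auto
lemma om1: "om \<noteq> 1" using omsq by auto
lemma om3: "1 + om \<noteq> 0" "om + 1 \<noteq> 0" using om1 by (auto simp: add0_iff)
lemma om2: "om \<noteq> om + 1" by (metis add_cancel_left_right one_neq_zero)

lemma univ4: "(x::'k) = 0 \<or> x = 1 \<or> x = om \<or> x = om + 1"
proof -
  have "x * (x + 1) * (x + om) * (x + om + 1) = x ^ 4 + x"
    by (simp add: algebra_simps eval_nat_numeral omsq)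
  also have "\<dots> = 0" by (simp add: pow4)
  finally show ?thesis by (auto simp: add0_iff add.assoc)
qed

lemma UNIV_k: "(UNIV::'k set) = {0, 1, om, om + 1}" using univ4 by auto

lemma quad0:
  assumes "a + b + c = 0" "a + b * om + c * om * om = 0" "a + b * (om + 1) + c * (om + 1) * (om + 1) = (0::'k)"
  shows "a = 0 \<and> b = 0 \<and> c = 0"
proof -
  have e1: "a + b + c = 0" using assms(1) .
  have e2: "a + b * om + c * om + c = 0" using assms(2) by (simp add: algebra_simps omsq)
  have e3: "a + b * om + b + c * om = 0" using assms(3) by (simp add: algebra_simps omsq)
  have "(a + b + c) + (a + b * om + c * om + c) + (a + b * om + b + c * om) = 0" using e1 e2 e3 by simp
  then have ha: "a = 0" by (simp add: algebra_simps)
  have "b * om + c * om + c = 0" using e2 ha by simp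
  moreover have "b + c = 0" using e1 ha by simp
  then have "c = b" by (metis add_eq_0_iff negk)
  ultimately have "b = 0" by (simp add: algebra_simps)
  then show ?thesis using ha \<open>c = b\<close> by simp
qed

end

lemma (in F4) F4_om1: "F4 (om + 1)"
  by unfold_locales (simp_all add: card4 algebra_simps omsq)

lemma peval_scale:
  assumes "homogeneous_of_degree f d"
  shows "peval emb f (\<lambda>i. s * z i) = s ^ d * peval emb f z"
proof -
  have "(\<Prod>i\<in>UNIV. (s * z i) ^ Poly_Mapping.lookup m i) = s ^ d * (\<Prod>i\<in>UNIV. z i ^ Poly_Mapping.lookup m i)"
    if m: "m \<in> Poly_Mapping.keys f" for m
  proof -
    have "(\<Prod>i\<in>UNIV. (s * z i) ^ Poly_Mapping.lookup m i) = (\<Prod>i\<in>UNIV. s ^ Poly_Mapping.lookup m i) * (\<Prod>i\<in>UNIV. z i ^ Poly_Mapping.lookup m i)"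
      by (simp add: power_mult_distrib prod.distrib)
    also have "(\<Prod>i\<in>UNIV. s ^ Poly_Mapping.lookup m i) = s ^ (\<Sum>i\<in>UNIV. Poly_Mapping.lookup m i)"
      by (simp add: power_sum)
    also have "(\<Sum>i\<in>UNIV. Poly_Mapping.lookup m i) = d" using assms m by (simp add: homogeneous_of_degree_def)
    finally show ?thesis .
  qed
  then show ?thesis unfolding peval_def by (simp add: sum_distrib_left mult_ac)
qed

lemma pdiff_scale:
  fixes f :: "'k::field mpoly4"
  assumes "homogeneous_of_degree f 4"
  shows "pdiff_eval f i (\<lambda>j. c * x j) = c ^ 3 * pdiff_eval f i x"
proof -
  have *: "Poly_Mapping.lookup f m * of_nat (Poly_Mapping.lookup m i) * (c * x i) ^ (Poly_Mapping.lookup m i - 1) *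
        (\<Prod>j\<in>UNIV - {i}. (c * x j) ^ Poly_Mapping.lookup m j)
      = c ^ 3 * (Poly_Mapping.lookup f m * of_nat (Poly_Mapping.lookup m i) * x i ^ (Poly_Mapping.lookup m i - 1) *
        (\<Prod>j\<in>UNIV - {i}. x j ^ Poly_Mapping.lookup m j))"
    if m: "m \<in> Poly_Mapping.keys f" for m
  proof (cases "Poly_Mapping.lookup m i = 0")
    case True then show ?thesis by simp
  next
    case False
    have s4: "(\<Sum>j\<in>UNIV. Poly_Mapping.lookup m j) = 4" using assms m by (simp add: homogeneous_of_degree_def)
    have "(\<Sum>j\<in>UNIV. Poly_Mapping.lookup m j) = Poly_Mapping.lookup m i + (\<Sum>j\<in>UNIV - {i}. Poly_Mapping.lookup m j)"
      by (simp add: sum.remove)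
    then have e: "(Poly_Mapping.lookup m i - 1) + (\<Sum>j\<in>UNIV - {i}. Poly_Mapping.lookup m j) = 3" using s4 False by linarith
    have "(c * x i) ^ (Poly_Mapping.lookup m i - 1) * (\<Prod>j\<in>UNIV - {i}. (c * x j) ^ Poly_Mapping.lookup m j)
       = c ^ ((Poly_Mapping.lookup m i - 1) + (\<Sum>j\<in>UNIV - {i}. Poly_Mapping.lookup m j)) * (x i ^ (Poly_Mapping.lookup m i - 1) * (\<Prod>j\<in>UNIV - {i}. x j ^ Poly_Mapping.lookup m j))"
      by (simp add: power_mult_distrib prod.distrib power_sum power_add mult_ac)
    then show ?thesis unfolding e by (simp add: mult_ac)
  qed
  show ?thesis unfolding pdiff_eval_def sum_distrib_left by (rule sum.cong[OF refl]) (rule *)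
qed

locale Q4 = F4 om for om :: "'k::{field,finite}" +
  fixes f :: "'k mpoly4"
  assumes hom: "homogeneous_of_degree f 4"
begin

abbreviation FF where "FF x \<equiv> eval4 f x"
definition g where "g x y = lin (grad f x) y"
definition Pf where "Pf x y = PEg (Poly_Mapping.lookup f) (Poly_Mapping.keys f) x y"
definition c2 where "c2 x y = coeff (Pf x y) 2"
definition c3 where "c3 x y = coeff (Pf x y) 3"

lemma evalPf: "FF (\<lambda>i. x i + u * y i) = poly (Pf x y) u"
  by (simp add: eval4_def peval_def Pf_def poly_PEg)

lemma degPf: "degree (Pf x y) \<le> 4"
  unfolding Pf_def by (rule degree_PEg) (use hom in \<open>auto simp: homogeneous_of_degree_def\<close>)

lemma Pf0: "coeff (Pf x y) 0 = FF x"
  by (simp add: Pf_def coeff0_PEg eval4_def peval_def)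

lemma Pf4: "coeff (Pf x y) 4 = FF y"
  unfolding Pf_def by (subst coeff4_PEg) (use hom in \<open>auto simp: homogeneous_of_degree_def eval4_def peval_def\<close>)

lemma Pf1: "coeff (Pf x y) 1 = g x y"
  unfolding Pf_def coeff1_PEg g_def lin_def grad_def pdiff_eval_def
  by (simp add: sum_distrib_left sum_distrib_right mult_ac sum.swap[where A="Poly_Mapping.keys f"])

lemma poly4:
  fixes p :: "'k poly"
  assumes "degree p \<le> 4"
  shows "poly p u = coeff p 0 + coeff p 1 * u + coeff p 2 * u^2 + coeff p 3 * u^3 + coeff p 4 * u^4"
proof -
  have "poly p u = (\<Sum>i\<le>degree p. coeff p i * u ^ i)" by (rule poly_altdef)
  also have "\<dots> = (\<Sum>i\<le>4. coeff p i * u ^ i)"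
    by (rule sum.mono_neutral_left) (use assms in \<open>auto simp: coeff_eq_0\<close>)
  also have "\<dots> = coeff p 0 + coeff p 1 * u + coeff p 2 * u^2 + coeff p 3 * u^3 + coeff p 4 * u^4"
    by (simp add: eval_nat_numeral atMost_Suc)
  finally show ?thesis .
qed

lemma EXP0: "FF (\<lambda>i. x i + u * y i) = FF x + g x y * u + c2 x y * u^2 + c3 x y * u^3 + FF y * u^4"
  unfolding evalPf poly4[OF degPf] Pf0 Pf1 Pf4 c2_def c3_def ..

lemma homF: "FF (\<lambda>i. c * x i) = c * FF x"
  using peval_scale[OF hom, of id c x] pow4 by (simp add: eval4_def)

lemma gradscale: "grad f (\<lambda>i. c * x i) = (\<lambda>i. c ^ 3 * grad f x i)"
  unfolding grad_def using pdiff_scale[OF hom] by simp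

lemma g_scale1: "g (\<lambda>i. c * x i) y = c ^ 3 * g x y"
  unfolding g_def gradscale lin_def by (simp add: sum_distrib_left mult_ac)

lemma g_lin: "g x (\<lambda>i. a * y i + b * z i) = a * g x y + b * g x z"
  unfolding g_def lin_def by (simp add: algebra_simps sum.distrib sum_distrib_left)

end

context Q4 begin

lemma swapF: "u * v = 1 \<Longrightarrow> FF (\<lambda>i. x i + u * y i) = u * FF (\<lambda>i. y i + v * x i)"
proof -
  assume uv: "u * v = 1"
  have "(\<lambda>i. x i + u * y i) = (\<lambda>i. u * (y i + v * x i))"
    by (rule ext) (simp add: distrib_left mult.assoc[symmetric] uv add.commute)
  then show ?thesis using homF by simp
qed

lemma eq0: "(p::'k) = q \<Longrightarrow> p + q = 0" by simp

lemma c3_eq: "c3 x y = g y x"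
proof -
  let ?a = "c3 x y + g y x" and ?b = "g x y + c3 y x" and ?c = "c2 x y + c2 y x"
  have "FF (\<lambda>i. x i + 1 * y i) = 1 * FF (\<lambda>i. y i + 1 * x i)" by (rule swapF) simp
  then have h1: "FF x + g x y * 1 + c2 x y * 1^2 + c3 x y * 1^3 + FF y * 1^4 + 1 * (FF y + g y x * 1 + c2 y x * 1^2 + c3 y x * 1^3 + FF x * 1^4) = 0"
    unfolding EXP0 by (rule eq0)
  have e1: "?a + ?b * 1 + ?c * 1 * 1 = 0" using h1 by (simp add: algebra_simps)
  have "FF (\<lambda>i. x i + om * y i) = om * FF (\<lambda>i. y i + (om + 1) * x i)" by (rule swapF) (simp add: algebra_simps omsq)
  then have h2: "FF x + g x y * om + c2 x y * om^2 + c3 x y * om^3 + FF y * om^4 + om * (FF y + g y x * (om+1) + c2 y x * (om+1)^2 + c3 y x * (om+1)^3 + FF x * (om+1)^4) = 0"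
    unfolding EXP0 by (rule eq0)
  have e2: "?a + ?b * om + ?c * om * om = 0" using h2 by (simp add: algebra_simps eval_nat_numeral omsq)
  have "FF (\<lambda>i. x i + (om + 1) * y i) = (om + 1) * FF (\<lambda>i. y i + om * x i)" by (rule swapF) (simp add: algebra_simps omsq)
  then have h3: "FF x + g x y * (om+1) + c2 x y * (om+1)^2 + c3 x y * (om+1)^3 + FF y * (om+1)^4 + (om+1) * (FF y + g y x * om + c2 y x * om^2 + c3 y x * om^3 + FF x * om^4) = 0"
    unfolding EXP0 by (rule eq0)
  have e3: "?a + ?b * (om+1) + ?c * (om+1) * (om+1) = 0" using h3 by (simp add: algebra_simps eval_nat_numeral omsq)
  have "?a = 0" using quad0[OF _ e2 e3] e1 by simp
  then show ?thesis by (simp add: add0_iff)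
qed

lemma euler: "g x x = 0"
proof -
  let ?a = "c3 x x" and ?b = "g x x" and ?c = "c2 x x"
  have s: "FF (\<lambda>i. x i + u * x i) = (1 + u) * FF x" for u
  proof -
    have "(\<lambda>i. x i + u * x i) = (\<lambda>i. (1 + u) * x i)" by (rule ext) (simp add: algebra_simps)
    then show ?thesis using homF by simp
  qed
  have h1: "FF x + g x x * 1 + c2 x x * 1^2 + c3 x x * 1^3 + FF x * 1^4 + (1 + 1) * FF x = 0"
    using s[of 1] unfolding EXP0 by (rule eq0)
  have e1: "?a + ?b * 1 + ?c * 1 * 1 = 0" using h1 by (simp add: algebra_simps)
  have h2: "FF x + g x x * om + c2 x x * om^2 + c3 x x * om^3 + FF x * om^4 + (1 + om) * FF x = 0"
    using s[of om] unfolding EXP0 by (rule eq0)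
  have e2: "?a + ?b * om + ?c * om * om = 0" using h2 by (simp add: algebra_simps eval_nat_numeral omsq)
  have h3: "FF x + g x x * (om+1) + c2 x x * (om+1)^2 + c3 x x * (om+1)^3 + FF x * (om+1)^4 + (1 + (om+1)) * FF x = 0"
    using s[of "om+1"] unfolding EXP0 by (rule eq0)
  have e3: "?a + ?b * (om+1) + ?c * (om+1) * (om+1) = 0" using h3 by (simp add: algebra_simps eval_nat_numeral omsq)
  show ?thesis using quad0[OF _ e2 e3] e1 by simp
qed

lemma EXP: "FF (\<lambda>i. x i + u * y i) = FF x + g x y * u + c2 x y * u^2 + g y x * u^3 + FF y * u"
  using EXP0[of x u y] by (simp add: c3_eq pow4)

lemma peval_to_ac: "peval to_ac f (\<lambda>i. to_ac (z i)) = to_ac (FF z)"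
  by (simp add: peval_def eval4_def to_ac_sum to_ac_prod)

lemma noline:
  assumes x: "x \<noteq> (\<lambda>_. 0)" and y: "y \<noteq> (\<lambda>_. 0)" and xy: "proj_pt x \<noteq> proj_pt y"
    and fy: "FF y = 0" and fl: "\<forall>u. FF (\<lambda>i. x i + u * y i) = 0"
  shows "contains_rat_line f"
proof -
  define P where "P = PEg (\<lambda>m. to_ac (Poly_Mapping.lookup f m)) (Poly_Mapping.keys f) (\<lambda>i. to_ac (x i)) (\<lambda>i. to_ac (y i))"
  have hk: "\<forall>m\<in>Poly_Mapping.keys f. (\<Sum>i\<in>UNIV. Poly_Mapping.lookup m i) = 4" using hom by (simp add: homogeneous_of_degree_def)
  have degP: "degree P \<le> 4" unfolding P_def by (rule degree_PEg) (use hk in auto)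
  have "coeff P 4 = peval to_ac f (\<lambda>i. to_ac (y i))" by (simp add: P_def coeff4_PEg[OF hk] peval_def)
  then have c4: "coeff P 4 = 0" using peval_to_ac[of y] fy by simp
  have pe: "peval to_ac f (\<lambda>i. to_ac (x i) + u * to_ac (y i)) = poly P u" for u
    by (simp add: P_def poly_PEg peval_def)
  have roots: "poly P (to_ac u) = 0" for u
  proof -
    have "poly P (to_ac u) = peval to_ac f (\<lambda>i. to_ac (x i + u * y i))" by (simp add: pe[symmetric])
    also have "\<dots> = to_ac (FF (\<lambda>i. x i + u * y i))" by (rule peval_to_ac)
    finally show ?thesis using fl by simp
  qed
  have P0: "P = 0"
  proof (rule ccontr)
    assume nz: "P \<noteq> 0"
    have "degree P \<noteq> 4" using c4 nz by (metis leading_coeff_0_iff)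
    then have d3: "degree P \<le> 3" using degP by linarith
    have "range to_ac \<subseteq> {z. poly P z = 0}" using roots by auto
    then have "card (range (to_ac::'k \<Rightarrow> 'k alg_closure)) \<le> card {z. poly P z = 0}"
      by (intro card_mono poly_roots_finite nz)
    also have "\<dots> \<le> degree P" by (rule card_poly_roots_bound[OF nz])
    also have "card (range (to_ac::'k \<Rightarrow> 'k alg_closure)) = CARD('k)" by (simp add: card_image inj_to_ac)
    finally show False using card4 d3 by simp
  qed
  show ?thesis unfolding contains_rat_line_def
  proof (intro exI conjI allI)
    show "x \<noteq> (\<lambda>_. 0)" "y \<noteq> (\<lambda>_. 0)" "proj_pt x \<noteq> proj_pt y" by fact+
    fix s t :: "'k alg_closure"
    show "peval to_ac f (\<lambda>i. s * to_ac (x i) + t * to_ac (y i)) = 0"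
    proof (cases "s = 0")
      case True
      have "peval to_ac f (\<lambda>i. s * to_ac (x i) + t * to_ac (y i)) = peval to_ac f (\<lambda>i. t * to_ac (y i))"
        using True by simp
      also have "\<dots> = t ^ 4 * peval to_ac f (\<lambda>i. to_ac (y i))" by (rule peval_scale[OF hom])
      finally show ?thesis using peval_to_ac[of y] fy by simp
    next
      case False
      have "(\<lambda>i. s * to_ac (x i) + t * to_ac (y i)) = (\<lambda>i. s * (to_ac (x i) + (t / s) * to_ac (y i)))"
        by (rule ext) (simp add: distrib_left mult.assoc[symmetric] False)
      then have "peval to_ac f (\<lambda>i. s * to_ac (x i) + t * to_ac (y i)) = s ^ 4 * peval to_ac f (\<lambda>i. to_ac (x i) + (t / s) * to_ac (y i))"
        using peval_scale[OF hom] by simp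
      also have "\<dots> = 0" unfolding pe P0 by simp
      finally show ?thesis .
    qed
  qed
qed

end

lemma (in F4) nucleus:
  fixes P :: "'k \<Rightarrow> 'k \<Rightarrow> 'k \<Rightarrow> 'k"
  defines "TT \<equiv> {(1,0,0),(0,1,0),(0,0,1),(1,1,1),(1,om,om*om)} :: ('k \<times> 'k \<times> 'k) set"
  assumes hom: "\<And>c x1 x2 x3. P (c*x1) (c*x2) (c*x3) = c * P x1 x2 x3"
   and z: "\<And>a1 a2 a3. (a1,a2,a3) \<in> TT \<Longrightarrow> P a1 a2 a3 = 0"
   and sec: "\<And>a1 a2 a3 b1 b2 b3 t. (a1,a2,a3) \<in> TT \<Longrightarrow> (b1,b2,b3) \<in> TT \<Longrightarrow> (a1,a2,a3) \<noteq> (b1,b2,b3) \<Longrightarrow>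
        P (a1 + t*b1) (a2 + t*b2) (a3 + t*b3) = t*t*P (a1+b1) (a2+b2) (a3+b3)"
   and tan: "\<And>a1 a2 a3 y1 y2 y3. (a1,a2,a3) \<in> TT \<Longrightarrow>
        P (a1+y1) (a2+y2) (a3+y3) + (om+1) * P (a1+om*y1) (a2+om*y2) (a3+om*y3) + om * P (a1+(om+1)*y1) (a2+(om+1)*y2) (a3+(om+1)*y3) = P y1 y2 y3"
   and Puvw: "P u v w = 0"
  shows "(u = 0 \<and> v = 0 \<and> w = 0) \<or> (\<exists>c a1 a2 a3. (a1,a2,a3) \<in> TT \<and> u = c*a1 \<and> v = c*a2 \<and> w = c*a3) \<or> P 1 1 0 = 0"
proof -
  have sec': "P (a1+b1) (a2+b2) (a3+b3) = t * P (a1 + t*b1) (a2 + t*b2) (a3 + t*b3)"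
    if "(a1,a2,a3) \<in> TT" "(b1,b2,b3) \<in> TT" "(a1,a2,a3) \<noteq> (b1,b2,b3)" "t \<noteq> 0" for a1 a2 a3 b1 b2 b3 t
  proof -
    have "t * P (a1 + t*b1) (a2 + t*b2) (a3 + t*b3) = t^3 * P (a1+b1) (a2+b2) (a3+b3)"
      using sec[OF that(1-3), of t] by (simp add: eval_nat_numeral mult.assoc)
    then show ?thesis using pow3[OF that(4)] by simp
  qed
  note z' = z[unfolded TT_def]
  note sec = sec[unfolded TT_def]
  note sec' = sec'[unfolded TT_def]
  note tan = tan[unfolded TT_def]
  note z = z'
  have k_120: "P 1 om 0 = (om+1) * P 1 1 0"
    using hom[of "1" "1" "om" "0"] sec[of "1" "0" "0" "0" "1" "0" "om"] hom[of "1" "1" "1" "0"] by (simp add: algebra_simps omsq z om0 om1 om2 om3)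
  have k_130: "P 1 (om+1) 0 = om * P 1 1 0"
    using hom[of "1" "1" "(om+1)" "0"] sec[of "1" "0" "0" "0" "1" "0" "(om+1)"] hom[of "1" "1" "1" "0"] by (simp add: algebra_simps omsq z om0 om1 om2 om3)
  have k_112: "P 1 1 om = om * P 1 1 0"
    using hom[of "(om+1)" "om" "om" "(om+1)"] sec[of "0" "0" "1" "1" "1" "1" "om"] hom[of "1" "1" "1" "0"] by (simp add: algebra_simps omsq z om0 om1 om2 om3)
  have k_113: "P 1 1 (om+1) = (om+1) * P 1 1 0"
    using hom[of "om" "(om+1)" "(om+1)" "om"] sec[of "0" "0" "1" "1" "1" "1" "(om+1)"] hom[of "1" "1" "1" "0"] by (simp add: algebra_simps omsq z om0 om1 om2 om3)
  have k_122: "P 1 om om = om * P 1 1 0"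
    using hom[of "1" "1" "om" "om"] sec'[of "0" "0" "1" "1" "om" "(om+1)" "om"] hom[of "om" "1" "om" "0"] k_120 by (simp add: algebra_simps omsq z om0 om1 om2 om3)
  have k_121: "P 1 om 1 = 1 * P 1 1 0"
    using hom[of "om" "(om+1)" "1" "(om+1)"] sec[of "0" "0" "1" "1" "om" "(om+1)" "(om+1)"] hom[of "1" "1" "om" "om"] k_122 by (simp add: algebra_simps omsq z om0 om1 om2 om3)
  have k_011: "P 0 1 1 = om * P 1 1 0"
    using hom[of "1" "0" "1" "1"] sec'[of "1" "1" "1" "1" "0" "0" "om"] hom[of "(om+1)" "1" "om" "om"] k_122 by (simp add: algebra_simps omsq z om0 om1 om2 om3)
  have k_133: "P 1 (om+1) (om+1) = om * P 1 1 0"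
    using hom[of "(om+1)" "om" "1" "1"] sec[of "1" "1" "1" "1" "0" "0" "(om+1)"] hom[of "1" "0" "1" "1"] k_011 by (simp add: algebra_simps omsq z om0 om1 om2 om3)
  have k_101: "P 1 0 1 = (om+1) * P 1 1 0"
    using hom[of "1" "1" "0" "1"] sec'[of "1" "1" "1" "0" "1" "0" "(om+1)"] hom[of "1" "1" "om" "1"] k_121 by (simp add: algebra_simps omsq z om0 om1 om2 om3)
  have k_131: "P 1 (om+1) 1 = om * P 1 1 0"
    using hom[of "1" "1" "(om+1)" "1"] sec[of "1" "1" "1" "0" "1" "0" "om"] hom[of "1" "1" "0" "1"] k_101 by (simp add: algebra_simps omsq z om0 om1 om2 om3)
  have k_013: "P 0 1 (om+1) = (om+1) * P 1 1 0"
    using hom[of "om" "0" "(om+1)" "om"] sec'[of "1" "1" "1" "1" "om" "(om+1)" "om"] hom[of "(om+1)" "1" "(om+1)" "0"] k_130 by (simp add: algebra_simps omsq z om0 om1 om2 om3)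
  have k_102: "P 1 0 om = om * P 1 1 0"
    using hom[of "(om+1)" "om" "0" "(om+1)"] sec[of "1" "1" "1" "1" "om" "(om+1)" "(om+1)"] hom[of "(om+1)" "0" "1" "(om+1)"] k_013 by (simp add: algebra_simps omsq z om0 om1 om2 om3)
  have k_012: "P 0 1 om = 1 * P 1 1 0"
    using hom[of "(om+1)" "0" "om" "(om+1)"] sec'[of "1" "om" "(om+1)" "1" "0" "0" "om"] hom[of "(om+1)" "1" "(om+1)" "1"] k_131 by (simp add: algebra_simps omsq z om0 om1 om2 om3)
  have k_103: "P 1 0 (om+1) = 1 * P 1 1 0"
    using hom[of "1" "1" "0" "(om+1)"] sec[of "1" "om" "(om+1)" "0" "1" "0" "om"] hom[of "1" "1" "(om+1)" "(om+1)"] k_133 by (simp add: algebra_simps omsq z om0 om1 om2 om3)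
  have k_132: "P 1 (om+1) om = om * P 1 1 0"
    using hom[of "1" "1" "(om+1)" "om"] tan[of "1" "0" "0" "1" "(om+1)" "om"] hom[of "(om+1)" "0" "1" "(om+1)"] k_013 hom[of "(om+1)" "1" "om" "1"] k_121 hom[of "om" "1" "1" "(om+1)"] k_113 by (simp add: algebra_simps omsq z om0 om1 om2 om3)
  from univ4[of u] show ?thesis
  proof (elim disjE)
    assume hu: "u = 0"
    from univ4[of v] show ?thesis
    proof (elim disjE)
      assume hv: "v = 0"
      from univ4[of w] show ?thesis
      proof (elim disjE)
        assume hw: "w = 0"
        have uvw: "u = 0" "v = 0" "w = 0" using hu hv hw by simp_all
        show ?thesis unfolding uvw by simp
      next
        assume hw: "w = 1"
        have uvw: "u = 0" "v = 0" "w = 1" using hu hv hw by simp_all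
        show ?thesis unfolding uvw by (intro disjI2[OF disjI1] exI[of _ "1"] exI[of _ "0"] exI[of _ "0"] exI[of _ "1"]) (simp add: TT_def algebra_simps omsq)
      next
        assume hw: "w = om"
        have uvw: "u = 0" "v = 0" "w = om" using hu hv hw by simp_all
        show ?thesis unfolding uvw by (intro disjI2[OF disjI1] exI[of _ "om"] exI[of _ "0"] exI[of _ "0"] exI[of _ "1"]) (simp add: TT_def algebra_simps omsq)
      next
        assume hw: "w = (om+1)"
        have uvw: "u = 0" "v = 0" "w = (om+1)" using hu hv hw by simp_all
        show ?thesis unfolding uvw by (intro disjI2[OF disjI1] exI[of _ "(om+1)"] exI[of _ "0"] exI[of _ "0"] exI[of _ "1"]) (simp add: TT_def algebra_simps omsq)
      qed
    next
      assume hv: "v = 1"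
      from univ4[of w] show ?thesis
      proof (elim disjE)
        assume hw: "w = 0"
        have uvw: "u = 0" "v = 1" "w = 0" using hu hv hw by simp_all
        show ?thesis unfolding uvw by (intro disjI2[OF disjI1] exI[of _ "1"] exI[of _ "0"] exI[of _ "1"] exI[of _ "0"]) (simp add: TT_def algebra_simps omsq)
      next
        assume hw: "w = 1"
        have uvw: "u = 0" "v = 1" "w = 1" using hu hv hw by simp_all
        have eqv: "P 0 1 1 = 1 * om * P 1 1 0" using hom[of "1" "0" "1" "1"] k_011 by (simp add: algebra_simps omsq om0 om1 om2 om3)
        show ?thesis using Puvw[unfolded uvw eqv] by (intro disjI2) (simp add: om0 om3)
      next
        assume hw: "w = om"
        have uvw: "u = 0" "v = 1" "w = om" using hu hv hw by simp_all
        have eqv: "P 0 1 om = 1 * 1 * P 1 1 0" using hom[of "1" "0" "1" "om"] k_012 by (simp add: algebra_simps omsq om0 om1 om2 om3)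
        show ?thesis using Puvw[unfolded uvw eqv] by (intro disjI2) (simp add: om0 om3)
      next
        assume hw: "w = (om+1)"
        have uvw: "u = 0" "v = 1" "w = (om+1)" using hu hv hw by simp_all
        have eqv: "P 0 1 (om+1) = 1 * (om+1) * P 1 1 0" using hom[of "1" "0" "1" "(om+1)"] k_013 by (simp add: algebra_simps omsq om0 om1 om2 om3)
        show ?thesis using Puvw[unfolded uvw eqv] by (intro disjI2) (simp add: om0 om3)
      qed
    next
      assume hv: "v = om"
      from univ4[of w] show ?thesis
      proof (elim disjE)
        assume hw: "w = 0"
        have uvw: "u = 0" "v = om" "w = 0" using hu hv hw by simp_all
        show ?thesis unfolding uvw by (intro disjI2[OF disjI1] exI[of _ "om"] exI[of _ "0"] exI[of _ "1"] exI[of _ "0"]) (simp add: TT_def algebra_simps omsq)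
      next
        assume hw: "w = 1"
        have uvw: "u = 0" "v = om" "w = 1" using hu hv hw by simp_all
        have eqv: "P 0 om 1 = om * (om+1) * P 1 1 0" using hom[of "om" "0" "1" "(om+1)"] k_013 by (simp add: algebra_simps omsq om0 om1 om2 om3)
        show ?thesis using Puvw[unfolded uvw eqv] by (intro disjI2) (simp add: om0 om3)
      next
        assume hw: "w = om"
        have uvw: "u = 0" "v = om" "w = om" using hu hv hw by simp_all
        have eqv: "P 0 om om = om * om * P 1 1 0" using hom[of "om" "0" "1" "1"] k_011 by (simp add: algebra_simps omsq om0 om1 om2 om3)
        show ?thesis using Puvw[unfolded uvw eqv] by (intro disjI2) (simp add: om0 om3)
      next
        assume hw: "w = (om+1)"
        have uvw: "u = 0" "v = om" "w = (om+1)" using hu hv hw by simp_all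
        have eqv: "P 0 om (om+1) = om * 1 * P 1 1 0" using hom[of "om" "0" "1" "om"] k_012 by (simp add: algebra_simps omsq om0 om1 om2 om3)
        show ?thesis using Puvw[unfolded uvw eqv] by (intro disjI2) (simp add: om0 om3)
      qed
    next
      assume hv: "v = (om+1)"
      from univ4[of w] show ?thesis
      proof (elim disjE)
        assume hw: "w = 0"
        have uvw: "u = 0" "v = (om+1)" "w = 0" using hu hv hw by simp_all
        show ?thesis unfolding uvw by (intro disjI2[OF disjI1] exI[of _ "(om+1)"] exI[of _ "0"] exI[of _ "1"] exI[of _ "0"]) (simp add: TT_def algebra_simps omsq)
      next
        assume hw: "w = 1"
        have uvw: "u = 0" "v = (om+1)" "w = 1" using hu hv hw by simp_all
        have eqv: "P 0 (om+1) 1 = (om+1) * 1 * P 1 1 0" using hom[of "(om+1)" "0" "1" "om"] k_012 by (simp add: algebra_simps omsq om0 om1 om2 om3)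
        show ?thesis using Puvw[unfolded uvw eqv] by (intro disjI2) (simp add: om0 om3)
      next
        assume hw: "w = om"
        have uvw: "u = 0" "v = (om+1)" "w = om" using hu hv hw by simp_all
        have eqv: "P 0 (om+1) om = (om+1) * (om+1) * P 1 1 0" using hom[of "(om+1)" "0" "1" "(om+1)"] k_013 by (simp add: algebra_simps omsq om0 om1 om2 om3)
        show ?thesis using Puvw[unfolded uvw eqv] by (intro disjI2) (simp add: om0 om3)
      next
        assume hw: "w = (om+1)"
        have uvw: "u = 0" "v = (om+1)" "w = (om+1)" using hu hv hw by simp_all
        have eqv: "P 0 (om+1) (om+1) = (om+1) * om * P 1 1 0" using hom[of "(om+1)" "0" "1" "1"] k_011 by (simp add: algebra_simps omsq om0 om1 om2 om3)
        show ?thesis using Puvw[unfolded uvw eqv] by (intro disjI2) (simp add: om0 om3)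
      qed
    qed
  next
    assume hu: "u = 1"
    from univ4[of v] show ?thesis
    proof (elim disjE)
      assume hv: "v = 0"
      from univ4[of w] show ?thesis
      proof (elim disjE)
        assume hw: "w = 0"
        have uvw: "u = 1" "v = 0" "w = 0" using hu hv hw by simp_all
        show ?thesis unfolding uvw by (intro disjI2[OF disjI1] exI[of _ "1"] exI[of _ "1"] exI[of _ "0"] exI[of _ "0"]) (simp add: TT_def algebra_simps omsq)
      next
        assume hw: "w = 1"
        have uvw: "u = 1" "v = 0" "w = 1" using hu hv hw by simp_all
        have eqv: "P 1 0 1 = 1 * (om+1) * P 1 1 0" using hom[of "1" "1" "0" "1"] k_101 by (simp add: algebra_simps omsq om0 om1 om2 om3)
        show ?thesis using Puvw[unfolded uvw eqv] by (intro disjI2) (simp add: om0 om3)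
      next
        assume hw: "w = om"
        have uvw: "u = 1" "v = 0" "w = om" using hu hv hw by simp_all
        have eqv: "P 1 0 om = 1 * om * P 1 1 0" using hom[of "1" "1" "0" "om"] k_102 by (simp add: algebra_simps omsq om0 om1 om2 om3)
        show ?thesis using Puvw[unfolded uvw eqv] by (intro disjI2) (simp add: om0 om3)
      next
        assume hw: "w = (om+1)"
        have uvw: "u = 1" "v = 0" "w = (om+1)" using hu hv hw by simp_all
        have eqv: "P 1 0 (om+1) = 1 * 1 * P 1 1 0" using hom[of "1" "1" "0" "(om+1)"] k_103 by (simp add: algebra_simps omsq om0 om1 om2 om3)
        show ?thesis using Puvw[unfolded uvw eqv] by (intro disjI2) (simp add: om0 om3)
      qed
    next
      assume hv: "v = 1"
      from univ4[of w] show ?thesis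
      proof (elim disjE)
        assume hw: "w = 0"
        have uvw: "u = 1" "v = 1" "w = 0" using hu hv hw by simp_all
        show ?thesis using Puvw[unfolded uvw] by (intro disjI2) simp
      next
        assume hw: "w = 1"
        have uvw: "u = 1" "v = 1" "w = 1" using hu hv hw by simp_all
        show ?thesis unfolding uvw by (intro disjI2[OF disjI1] exI[of _ "1"] exI[of _ "1"] exI[of _ "1"] exI[of _ "1"]) (simp add: TT_def algebra_simps omsq)
      next
        assume hw: "w = om"
        have uvw: "u = 1" "v = 1" "w = om" using hu hv hw by simp_all
        have eqv: "P 1 1 om = 1 * om * P 1 1 0" using hom[of "1" "1" "1" "om"] k_112 by (simp add: algebra_simps omsq om0 om1 om2 om3)
        show ?thesis using Puvw[unfolded uvw eqv] by (intro disjI2) (simp add: om0 om3)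
      next
        assume hw: "w = (om+1)"
        have uvw: "u = 1" "v = 1" "w = (om+1)" using hu hv hw by simp_all
        have eqv: "P 1 1 (om+1) = 1 * (om+1) * P 1 1 0" using hom[of "1" "1" "1" "(om+1)"] k_113 by (simp add: algebra_simps omsq om0 om1 om2 om3)
        show ?thesis using Puvw[unfolded uvw eqv] by (intro disjI2) (simp add: om0 om3)
      qed
    next
      assume hv: "v = om"
      from univ4[of w] show ?thesis
      proof (elim disjE)
        assume hw: "w = 0"
        have uvw: "u = 1" "v = om" "w = 0" using hu hv hw by simp_all
        have eqv: "P 1 om 0 = 1 * (om+1) * P 1 1 0" using hom[of "1" "1" "om" "0"] k_120 by (simp add: algebra_simps omsq om0 om1 om2 om3)
        show ?thesis using Puvw[unfolded uvw eqv] by (intro disjI2) (simp add: om0 om3)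
      next
        assume hw: "w = 1"
        have uvw: "u = 1" "v = om" "w = 1" using hu hv hw by simp_all
        have eqv: "P 1 om 1 = 1 * 1 * P 1 1 0" using hom[of "1" "1" "om" "1"] k_121 by (simp add: algebra_simps omsq om0 om1 om2 om3)
        show ?thesis using Puvw[unfolded uvw eqv] by (intro disjI2) (simp add: om0 om3)
      next
        assume hw: "w = om"
        have uvw: "u = 1" "v = om" "w = om" using hu hv hw by simp_all
        have eqv: "P 1 om om = 1 * om * P 1 1 0" using hom[of "1" "1" "om" "om"] k_122 by (simp add: algebra_simps omsq om0 om1 om2 om3)
        show ?thesis using Puvw[unfolded uvw eqv] by (intro disjI2) (simp add: om0 om3)
      next
        assume hw: "w = (om+1)"
        have uvw: "u = 1" "v = om" "w = (om+1)" using hu hv hw by simp_all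
        show ?thesis unfolding uvw by (intro disjI2[OF disjI1] exI[of _ "1"] exI[of _ "1"] exI[of _ "om"] exI[of _ "om*om"]) (simp add: TT_def algebra_simps omsq)
      qed
    next
      assume hv: "v = (om+1)"
      from univ4[of w] show ?thesis
      proof (elim disjE)
        assume hw: "w = 0"
        have uvw: "u = 1" "v = (om+1)" "w = 0" using hu hv hw by simp_all
        have eqv: "P 1 (om+1) 0 = 1 * om * P 1 1 0" using hom[of "1" "1" "(om+1)" "0"] k_130 by (simp add: algebra_simps omsq om0 om1 om2 om3)
        show ?thesis using Puvw[unfolded uvw eqv] by (intro disjI2) (simp add: om0 om3)
      next
        assume hw: "w = 1"
        have uvw: "u = 1" "v = (om+1)" "w = 1" using hu hv hw by simp_all
        have eqv: "P 1 (om+1) 1 = 1 * om * P 1 1 0" using hom[of "1" "1" "(om+1)" "1"] k_131 by (simp add: algebra_simps omsq om0 om1 om2 om3)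
        show ?thesis using Puvw[unfolded uvw eqv] by (intro disjI2) (simp add: om0 om3)
      next
        assume hw: "w = om"
        have uvw: "u = 1" "v = (om+1)" "w = om" using hu hv hw by simp_all
        have eqv: "P 1 (om+1) om = 1 * om * P 1 1 0" using hom[of "1" "1" "(om+1)" "om"] k_132 by (simp add: algebra_simps omsq om0 om1 om2 om3)
        show ?thesis using Puvw[unfolded uvw eqv] by (intro disjI2) (simp add: om0 om3)
      next
        assume hw: "w = (om+1)"
        have uvw: "u = 1" "v = (om+1)" "w = (om+1)" using hu hv hw by simp_all
        have eqv: "P 1 (om+1) (om+1) = 1 * om * P 1 1 0" using hom[of "1" "1" "(om+1)" "(om+1)"] k_133 by (simp add: algebra_simps omsq om0 om1 om2 om3)
        show ?thesis using Puvw[unfolded uvw eqv] by (intro disjI2) (simp add: om0 om3)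
      qed
    qed
  next
    assume hu: "u = om"
    from univ4[of v] show ?thesis
    proof (elim disjE)
      assume hv: "v = 0"
      from univ4[of w] show ?thesis
      proof (elim disjE)
        assume hw: "w = 0"
        have uvw: "u = om" "v = 0" "w = 0" using hu hv hw by simp_all
        show ?thesis unfolding uvw by (intro disjI2[OF disjI1] exI[of _ "om"] exI[of _ "1"] exI[of _ "0"] exI[of _ "0"]) (simp add: TT_def algebra_simps omsq)
      next
        assume hw: "w = 1"
        have uvw: "u = om" "v = 0" "w = 1" using hu hv hw by simp_all
        have eqv: "P om 0 1 = om * 1 * P 1 1 0" using hom[of "om" "1" "0" "(om+1)"] k_103 by (simp add: algebra_simps omsq om0 om1 om2 om3)
        show ?thesis using Puvw[unfolded uvw eqv] by (intro disjI2) (simp add: om0 om3)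
      next
        assume hw: "w = om"
        have uvw: "u = om" "v = 0" "w = om" using hu hv hw by simp_all
        have eqv: "P om 0 om = om * (om+1) * P 1 1 0" using hom[of "om" "1" "0" "1"] k_101 by (simp add: algebra_simps omsq om0 om1 om2 om3)
        show ?thesis using Puvw[unfolded uvw eqv] by (intro disjI2) (simp add: om0 om3)
      next
        assume hw: "w = (om+1)"
        have uvw: "u = om" "v = 0" "w = (om+1)" using hu hv hw by simp_all
        have eqv: "P om 0 (om+1) = om * om * P 1 1 0" using hom[of "om" "1" "0" "om"] k_102 by (simp add: algebra_simps omsq om0 om1 om2 om3)
        show ?thesis using Puvw[unfolded uvw eqv] by (intro disjI2) (simp add: om0 om3)
      qed
    next
      assume hv: "v = 1"
      from univ4[of w] show ?thesis
      proof (elim disjE)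
        assume hw: "w = 0"
        have uvw: "u = om" "v = 1" "w = 0" using hu hv hw by simp_all
        have eqv: "P om 1 0 = om * om * P 1 1 0" using hom[of "om" "1" "(om+1)" "0"] k_130 by (simp add: algebra_simps omsq om0 om1 om2 om3)
        show ?thesis using Puvw[unfolded uvw eqv] by (intro disjI2) (simp add: om0 om3)
      next
        assume hw: "w = 1"
        have uvw: "u = om" "v = 1" "w = 1" using hu hv hw by simp_all
        have eqv: "P om 1 1 = om * om * P 1 1 0" using hom[of "om" "1" "(om+1)" "(om+1)"] k_133 by (simp add: algebra_simps omsq om0 om1 om2 om3)
        show ?thesis using Puvw[unfolded uvw eqv] by (intro disjI2) (simp add: om0 om3)
      next
        assume hw: "w = om"
        have uvw: "u = om" "v = 1" "w = om" using hu hv hw by simp_all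
        have eqv: "P om 1 om = om * om * P 1 1 0" using hom[of "om" "1" "(om+1)" "1"] k_131 by (simp add: algebra_simps omsq om0 om1 om2 om3)
        show ?thesis using Puvw[unfolded uvw eqv] by (intro disjI2) (simp add: om0 om3)
      next
        assume hw: "w = (om+1)"
        have uvw: "u = om" "v = 1" "w = (om+1)" using hu hv hw by simp_all
        have eqv: "P om 1 (om+1) = om * om * P 1 1 0" using hom[of "om" "1" "(om+1)" "om"] k_132 by (simp add: algebra_simps omsq om0 om1 om2 om3)
        show ?thesis using Puvw[unfolded uvw eqv] by (intro disjI2) (simp add: om0 om3)
      qed
    next
      assume hv: "v = om"
      from univ4[of w] show ?thesis
      proof (elim disjE)
        assume hw: "w = 0"
        have uvw: "u = om" "v = om" "w = 0" using hu hv hw by simp_all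
        have eqv: "P om om 0 = om * 1 * P 1 1 0" using hom[of "om" "1" "1" "0"] by (simp add: algebra_simps omsq om0 om1 om2 om3)
        show ?thesis using Puvw[unfolded uvw eqv] by (intro disjI2) (simp add: om0 om3)
      next
        assume hw: "w = 1"
        have uvw: "u = om" "v = om" "w = 1" using hu hv hw by simp_all
        have eqv: "P om om 1 = om * (om+1) * P 1 1 0" using hom[of "om" "1" "1" "(om+1)"] k_113 by (simp add: algebra_simps omsq om0 om1 om2 om3)
        show ?thesis using Puvw[unfolded uvw eqv] by (intro disjI2) (simp add: om0 om3)
      next
        assume hw: "w = om"
        have uvw: "u = om" "v = om" "w = om" using hu hv hw by simp_all
        show ?thesis unfolding uvw by (intro disjI2[OF disjI1] exI[of _ "om"] exI[of _ "1"] exI[of _ "1"] exI[of _ "1"]) (simp add: TT_def algebra_simps omsq)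
      next
        assume hw: "w = (om+1)"
        have uvw: "u = om" "v = om" "w = (om+1)" using hu hv hw by simp_all
        have eqv: "P om om (om+1) = om * om * P 1 1 0" using hom[of "om" "1" "1" "om"] k_112 by (simp add: algebra_simps omsq om0 om1 om2 om3)
        show ?thesis using Puvw[unfolded uvw eqv] by (intro disjI2) (simp add: om0 om3)
      qed
    next
      assume hv: "v = (om+1)"
      from univ4[of w] show ?thesis
      proof (elim disjE)
        assume hw: "w = 0"
        have uvw: "u = om" "v = (om+1)" "w = 0" using hu hv hw by simp_all
        have eqv: "P om (om+1) 0 = om * (om+1) * P 1 1 0" using hom[of "om" "1" "om" "0"] k_120 by (simp add: algebra_simps omsq om0 om1 om2 om3)
        show ?thesis using Puvw[unfolded uvw eqv] by (intro disjI2) (simp add: om0 om3)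
      next
        assume hw: "w = 1"
        have uvw: "u = om" "v = (om+1)" "w = 1" using hu hv hw by simp_all
        show ?thesis unfolding uvw by (intro disjI2[OF disjI1] exI[of _ "om"] exI[of _ "1"] exI[of _ "om"] exI[of _ "om*om"]) (simp add: TT_def algebra_simps omsq)
      next
        assume hw: "w = om"
        have uvw: "u = om" "v = (om+1)" "w = om" using hu hv hw by simp_all
        have eqv: "P om (om+1) om = om * 1 * P 1 1 0" using hom[of "om" "1" "om" "1"] k_121 by (simp add: algebra_simps omsq om0 om1 om2 om3)
        show ?thesis using Puvw[unfolded uvw eqv] by (intro disjI2) (simp add: om0 om3)
      next
        assume hw: "w = (om+1)"
        have uvw: "u = om" "v = (om+1)" "w = (om+1)" using hu hv hw by simp_all
        have eqv: "P om (om+1) (om+1) = om * om * P 1 1 0" using hom[of "om" "1" "om" "om"] k_122 by (simp add: algebra_simps omsq om0 om1 om2 om3)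
        show ?thesis using Puvw[unfolded uvw eqv] by (intro disjI2) (simp add: om0 om3)
      qed
    qed
  next
    assume hu: "u = (om+1)"
    from univ4[of v] show ?thesis
    proof (elim disjE)
      assume hv: "v = 0"
      from univ4[of w] show ?thesis
      proof (elim disjE)
        assume hw: "w = 0"
        have uvw: "u = (om+1)" "v = 0" "w = 0" using hu hv hw by simp_all
        show ?thesis unfolding uvw by (intro disjI2[OF disjI1] exI[of _ "(om+1)"] exI[of _ "1"] exI[of _ "0"] exI[of _ "0"]) (simp add: TT_def algebra_simps omsq)
      next
        assume hw: "w = 1"
        have uvw: "u = (om+1)" "v = 0" "w = 1" using hu hv hw by simp_all
        have eqv: "P (om+1) 0 1 = (om+1) * om * P 1 1 0" using hom[of "(om+1)" "1" "0" "om"] k_102 by (simp add: algebra_simps omsq om0 om1 om2 om3)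
        show ?thesis using Puvw[unfolded uvw eqv] by (intro disjI2) (simp add: om0 om3)
      next
        assume hw: "w = om"
        have uvw: "u = (om+1)" "v = 0" "w = om" using hu hv hw by simp_all
        have eqv: "P (om+1) 0 om = (om+1) * 1 * P 1 1 0" using hom[of "(om+1)" "1" "0" "(om+1)"] k_103 by (simp add: algebra_simps omsq om0 om1 om2 om3)
        show ?thesis using Puvw[unfolded uvw eqv] by (intro disjI2) (simp add: om0 om3)
      next
        assume hw: "w = (om+1)"
        have uvw: "u = (om+1)" "v = 0" "w = (om+1)" using hu hv hw by simp_all
        have eqv: "P (om+1) 0 (om+1) = (om+1) * (om+1) * P 1 1 0" using hom[of "(om+1)" "1" "0" "1"] k_101 by (simp add: algebra_simps omsq om0 om1 om2 om3)
        show ?thesis using Puvw[unfolded uvw eqv] by (intro disjI2) (simp add: om0 om3)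
      qed
    next
      assume hv: "v = 1"
      from univ4[of w] show ?thesis
      proof (elim disjE)
        assume hw: "w = 0"
        have uvw: "u = (om+1)" "v = 1" "w = 0" using hu hv hw by simp_all
        have eqv: "P (om+1) 1 0 = (om+1) * (om+1) * P 1 1 0" using hom[of "(om+1)" "1" "om" "0"] k_120 by (simp add: algebra_simps omsq om0 om1 om2 om3)
        show ?thesis using Puvw[unfolded uvw eqv] by (intro disjI2) (simp add: om0 om3)
      next
        assume hw: "w = 1"
        have uvw: "u = (om+1)" "v = 1" "w = 1" using hu hv hw by simp_all
        have eqv: "P (om+1) 1 1 = (om+1) * om * P 1 1 0" using hom[of "(om+1)" "1" "om" "om"] k_122 by (simp add: algebra_simps omsq om0 om1 om2 om3)
        show ?thesis using Puvw[unfolded uvw eqv] by (intro disjI2) (simp add: om0 om3)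
      next
        assume hw: "w = om"
        have uvw: "u = (om+1)" "v = 1" "w = om" using hu hv hw by simp_all
        show ?thesis unfolding uvw by (intro disjI2[OF disjI1] exI[of _ "(om+1)"] exI[of _ "1"] exI[of _ "om"] exI[of _ "om*om"]) (simp add: TT_def algebra_simps omsq)
      next
        assume hw: "w = (om+1)"
        have uvw: "u = (om+1)" "v = 1" "w = (om+1)" using hu hv hw by simp_all
        have eqv: "P (om+1) 1 (om+1) = (om+1) * 1 * P 1 1 0" using hom[of "(om+1)" "1" "om" "1"] k_121 by (simp add: algebra_simps omsq om0 om1 om2 om3)
        show ?thesis using Puvw[unfolded uvw eqv] by (intro disjI2) (simp add: om0 om3)
      qed
    next
      assume hv: "v = om"
      from univ4[of w] show ?thesis
      proof (elim disjE)
        assume hw: "w = 0"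
        have uvw: "u = (om+1)" "v = om" "w = 0" using hu hv hw by simp_all
        have eqv: "P (om+1) om 0 = (om+1) * om * P 1 1 0" using hom[of "(om+1)" "1" "(om+1)" "0"] k_130 by (simp add: algebra_simps omsq om0 om1 om2 om3)
        show ?thesis using Puvw[unfolded uvw eqv] by (intro disjI2) (simp add: om0 om3)
      next
        assume hw: "w = 1"
        have uvw: "u = (om+1)" "v = om" "w = 1" using hu hv hw by simp_all
        have eqv: "P (om+1) om 1 = (om+1) * om * P 1 1 0" using hom[of "(om+1)" "1" "(om+1)" "om"] k_132 by (simp add: algebra_simps omsq om0 om1 om2 om3)
        show ?thesis using Puvw[unfolded uvw eqv] by (intro disjI2) (simp add: om0 om3)
      next
        assume hw: "w = om"
        have uvw: "u = (om+1)" "v = om" "w = om" using hu hv hw by simp_all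
        have eqv: "P (om+1) om om = (om+1) * om * P 1 1 0" using hom[of "(om+1)" "1" "(om+1)" "(om+1)"] k_133 by (simp add: algebra_simps omsq om0 om1 om2 om3)
        show ?thesis using Puvw[unfolded uvw eqv] by (intro disjI2) (simp add: om0 om3)
      next
        assume hw: "w = (om+1)"
        have uvw: "u = (om+1)" "v = om" "w = (om+1)" using hu hv hw by simp_all
        have eqv: "P (om+1) om (om+1) = (om+1) * om * P 1 1 0" using hom[of "(om+1)" "1" "(om+1)" "1"] k_131 by (simp add: algebra_simps omsq om0 om1 om2 om3)
        show ?thesis using Puvw[unfolded uvw eqv] by (intro disjI2) (simp add: om0 om3)
      qed
    next
      assume hv: "v = (om+1)"
      from univ4[of w] show ?thesis
      proof (elim disjE)
        assume hw: "w = 0"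
        have uvw: "u = (om+1)" "v = (om+1)" "w = 0" using hu hv hw by simp_all
        have eqv: "P (om+1) (om+1) 0 = (om+1) * 1 * P 1 1 0" using hom[of "(om+1)" "1" "1" "0"] by (simp add: algebra_simps omsq om0 om1 om2 om3)
        show ?thesis using Puvw[unfolded uvw eqv] by (intro disjI2) (simp add: om0 om3)
      next
        assume hw: "w = 1"
        have uvw: "u = (om+1)" "v = (om+1)" "w = 1" using hu hv hw by simp_all
        have eqv: "P (om+1) (om+1) 1 = (om+1) * om * P 1 1 0" using hom[of "(om+1)" "1" "1" "om"] k_112 by (simp add: algebra_simps omsq om0 om1 om2 om3)
        show ?thesis using Puvw[unfolded uvw eqv] by (intro disjI2) (simp add: om0 om3)
      next
        assume hw: "w = om"
        have uvw: "u = (om+1)" "v = (om+1)" "w = om" using hu hv hw by simp_all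
        have eqv: "P (om+1) (om+1) om = (om+1) * (om+1) * P 1 1 0" using hom[of "(om+1)" "1" "1" "(om+1)"] k_113 by (simp add: algebra_simps omsq om0 om1 om2 om3)
        show ?thesis using Puvw[unfolded uvw eqv] by (intro disjI2) (simp add: om0 om3)
      next
        assume hw: "w = (om+1)"
        have uvw: "u = (om+1)" "v = (om+1)" "w = (om+1)" using hu hv hw by simp_all
        show ?thesis unfolding uvw by (intro disjI2[OF disjI1] exI[of _ "(om+1)"] exI[of _ "1"] exI[of _ "1"] exI[of _ "1"]) (simp add: TT_def algebra_simps omsq)
      qed
    qed
  qed
qed

lemma proj_scale:
  assumes c: "(c::'k::field) \<noteq> 0"
  shows "proj_pt (\<lambda>i. c * x i) = proj_pt x"
  unfolding proj_pt_def
proof (rule Set.set_eqI, rule iffI)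
  fix z assume "z \<in> {\<lambda>i. d * (c * x i) |d. d \<noteq> 0}"
  then obtain d where "d \<noteq> 0" "z = (\<lambda>i. d * (c * x i))" by auto
  then show "z \<in> {\<lambda>i. d * x i |d. d \<noteq> 0}" using c by (auto intro!: exI[of _ "d * c"] simp: mult.assoc)
next
  fix z assume "z \<in> {\<lambda>i. d * x i |d. d \<noteq> 0}"
  then obtain d where "d \<noteq> 0" "z = (\<lambda>i. d * x i)" by auto
  then show "z \<in> {\<lambda>i. d * (c * x i) |d. d \<noteq> 0}" using c
    by (auto intro!: exI[of _ "d / c"] simp: mult.assoc)
qed

lemma proj_eqD: "proj_pt x = proj_pt y \<Longrightarrow> \<exists>c. (c::'k::field) \<noteq> 0 \<and> y = (\<lambda>i. c * x i)"
proof -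
  assume e: "proj_pt x = proj_pt y"
  have "y \<in> proj_pt y" unfolding proj_pt_def by (auto intro!: exI[of _ 1])
  then have "y \<in> proj_pt x" using e by simp
  then show ?thesis unfolding proj_pt_def by auto
qed

definition comb :: "(4 \<Rightarrow> 'k::comm_ring_1) \<Rightarrow> (4 \<Rightarrow> 'k) \<Rightarrow> (4 \<Rightarrow> 'k) \<Rightarrow> 'k \<Rightarrow> 'k \<Rightarrow> 'k \<Rightarrow> (4 \<Rightarrow> 'k)"
  where "comb q1 q2 q3 u v w = (\<lambda>i. u * q1 i + v * q2 i + w * q3 i)"

lemma lin_add: "lin a (\<lambda>i. x i + y i) = lin a x + lin a y"
  by (simp add: lin_def algebra_simps sum.distrib)
lemma lin_scale: "lin a (\<lambda>i. c * x i) = c * lin a x"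
  by (simp add: lin_def algebra_simps sum_distrib_left)
lemma lin_comb: "lin a (comb q1 q2 q3 u v w) = u * lin a q1 + v * lin a q2 + w * lin a q3"
  by (simp add: comb_def lin_def algebra_simps sum.distrib sum_distrib_left)

locale S4 = Q4 +
  assumes no_rat_line: "\<not> contains_rat_line f"
    and nonsing: "\<forall>x. x \<noteq> (\<lambda>_. 0) \<and> eval4 f x = 0 \<longrightarrow> nonsingular_at f x"
begin

definition tang where
  "tang a x \<longleftrightarrow> x \<noteq> (\<lambda>_. 0) \<and> FF x = 0 \<and> (\<exists>c. c \<noteq> 0 \<and> grad f x = (\<lambda>i. c * a i))"

lemma tang_in: "tang a p \<Longrightarrow> lin a p = 0"
proof -
  assume t: "tang a p"
  then obtain c where c: "c \<noteq> 0" "grad f p = (\<lambda>i. c * a i)" unfolding tang_def by auto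
  have "0 = g p p" by (simp add: euler)
  also have "\<dots> = c * lin a p" unfolding g_def c(2) lin_def by (simp add: sum_distrib_left mult_ac)
  finally show ?thesis using c(1) by simp
qed

lemma tang_g: "tang a p \<Longrightarrow> lin a y = 0 \<Longrightarrow> g p y = 0"
proof -
  assume t: "tang a p" and y: "lin a y = 0"
  then obtain c where c: "grad f p = (\<lambda>i. c * a i)" unfolding tang_def by auto
  have "g p y = c * lin a y" unfolding g_def c lin_def by (simp add: sum_distrib_left mult_ac)
  then show ?thesis using y by simp
qed

lemma tang_scale: "tang a p \<Longrightarrow> c \<noteq> 0 \<Longrightarrow> tang a (\<lambda>i. c * p i)"
proof -
  assume t: "tang a p" and c: "c \<noteq> 0"
  then obtain d where d: "d \<noteq> 0" "grad f p = (\<lambda>i. d * a i)" and p: "p \<noteq> (\<lambda>_. 0)" "FF p = 0" unfolding tang_def by auto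
  have "(\<lambda>i. c * p i) \<noteq> (\<lambda>_. 0)"
  proof
    assume "(\<lambda>i. c * p i) = (\<lambda>_. 0)"
    then have "\<forall>i. c * p i = 0" by metis
    then have "p = (\<lambda>_. 0)" using c by auto
    then show False using p by simp
  qed
  moreover have "FF (\<lambda>i. c * p i) = 0" using homF p by simp
  moreover have "grad f (\<lambda>i. c * p i) = (\<lambda>i. (c^3 * d) * a i)" unfolding gradscale d by (simp add: mult.assoc)
  moreover have "c ^ 3 * d \<noteq> 0" using c d by simp
  ultimately show ?thesis unfolding tang_def by blast
qed

lemma secant:
  assumes "tang a p" "tang a q"
  shows "FF (\<lambda>i. p i + t * q i) = t * t * FF (\<lambda>i. p i + q i)"
proof -
  have z: "FF p = 0" "FF q = 0" "g p q = 0" "g q p = 0"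
    using assms tang_g[OF assms(1) tang_in[OF assms(2)]] tang_g[OF assms(2) tang_in[OF assms(1)]] unfolding tang_def by auto
  have "FF (\<lambda>i. p i + t * q i) = c2 p q * t^2" using EXP[of p t q] z by simp
  moreover have "FF (\<lambda>i. p i + 1 * q i) = c2 p q" using EXP[of p 1 q] z by simp
  ultimately show ?thesis by (simp add: power2_eq_square mult_ac)
qed

lemma tanl:
  assumes "tang a p" "lin a y = 0" "b * b = b + 1"
  shows "FF (\<lambda>i. p i + y i) + (b + 1) * FF (\<lambda>i. p i + b * y i) + b * FF (\<lambda>i. p i + (b + 1) * y i) = FF y"
proof -
  have z: "FF p = 0" "g p y = 0" using assms tang_g unfolding tang_def by auto
  have bb: "b * (b * x) = b * x + x" for x by (metis assms(3) distrib_right mult.assoc mult_1)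
  have e1: "FF (\<lambda>i. p i + y i) = c2 p y + g y p + FF y" using EXP[of p 1 y] z by simp
  have e2: "FF (\<lambda>i. p i + b * y i) = c2 p y * b^2 + g y p * b^3 + FF y * b" using EXP[of p b y] z by simp
  have e3: "FF (\<lambda>i. p i + (b+1) * y i) = c2 p y * (b+1)^2 + g y p * (b+1)^3 + FF y * (b+1)" using EXP[of p "b+1" y] z by simp
  show ?thesis unfolding e1 e2 e3 by (simp add: algebra_simps eval_nat_numeral bb assms(3))
qed

end

lemma card_fibers:
  fixes L :: "'x \<Rightarrow> 'b" and tr :: "'b \<Rightarrow> 'x \<Rightarrow> 'x"
  assumes finU: "finite U" and fin: "finite B" and LB: "\<And>x. x \<in> U \<Longrightarrow> L x \<in> B"
    and bij: "\<And>b. b \<in> B \<Longrightarrow> bij_betw (tr b) {x\<in>U. L x = z} {x\<in>U. L x = b}"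
  shows "card U = card B * card {x\<in>U. L x = z}"
proof -
  have U: "U = (\<Union>b\<in>B. {x\<in>U. L x = b})" using LB by auto
  have "card (\<Union>b\<in>B. {x\<in>U. L x = b}) = (\<Sum>b\<in>B. card {x\<in>U. L x = b})"
    by (rule card_UN_disjoint) (auto simp: fin finU)
  also have "\<dots> = (\<Sum>b\<in>B. card {x\<in>U. L x = z})"
  proof (rule sum.cong[OF refl])
    fix b assume "b \<in> B"
    show "card {x\<in>U. L x = b} = card {x\<in>U. L x = z}" by (rule bij_betw_same_card[OF bij[OF \<open>b \<in> B\<close>], symmetric])
  qed
  finally show ?thesis using U by simp
qed

context S4 begin

lemma card_UNIV4: "card (UNIV::(4\<Rightarrow>'a) set) = 256"
  using card4 by (simp add: card_fun)

lemma tbij: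
  fixes e :: "4 \<Rightarrow> 'a" and L :: "(4 \<Rightarrow> 'a) \<Rightarrow> 'a"
  assumes "\<And>x. x \<in> U \<Longrightarrow> (\<lambda>i. x i + e i) \<in> U" "\<And>x. L (\<lambda>i. x i + e i) = L x + (c::'a)"
  shows "bij_betw (\<lambda>x i. x i + e i) {x\<in>U. L x = z} {x\<in>U. L x = z + c}"
proof (rule bij_betwI[where g="\<lambda>x i. x i + e i"])
  show "(\<lambda>x i. x i + e i) \<in> {x\<in>U. L x = z} \<rightarrow> {x\<in>U. L x = z + c}" using assms by auto
  show "(\<lambda>x i. x i + e i) \<in> {x\<in>U. L x = z + c} \<rightarrow> {x\<in>U. L x = z}"
  proof
    fix x assume "x \<in> {x\<in>U. L x = z + c}"
    then have "L x = z + c" "x \<in> U" by simp_all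
    then show "(\<lambda>i. x i + e i) \<in> {x\<in>U. L x = z}" using assms[of x] by (simp add: add.assoc)
  qed
qed (simp_all add: add.assoc fun_eq_iff)

lemma card_hyp:
  fixes a :: "4 \<Rightarrow> 'a"
  assumes a: "a \<noteq> (\<lambda>_. 0)"
  shows "card {x. lin a x = 0} = 64"
proof -
  obtain i0 where i0: "a i0 \<noteq> 0" using a by auto
  define e where "e = (\<lambda>i. if i = i0 then inverse (a i0) else (0::'a))"
  have le: "lin a e = 1" unfolding lin_def e_def using i0 by (simp add: if_distrib cong: if_cong)
  have "card (UNIV::(4\<Rightarrow>'a) set) = card (UNIV::'a set) * card {x\<in>UNIV. lin a x = 0}"
  proof (rule card_fibers[where tr="\<lambda>b x i. x i + b * e i"])
    fix b :: 'a
    have "bij_betw (\<lambda>x i. x i + b * e i) {x\<in>UNIV. lin a x = 0} {x\<in>UNIV. lin a x = 0 + b}"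
      by (rule tbij) (simp_all add: lin_add lin_scale le)
    then show "bij_betw (\<lambda>x i. x i + b * e i) {x\<in>UNIV. lin a x = 0} {x\<in>UNIV. lin a x = b}" by simp
  qed auto
  then show ?thesis using card_UNIV4 card4 by simp
qed

lemma card_V:
  fixes a1 a2 e2 :: "4 \<Rightarrow> 'a"
  assumes a1: "a1 \<noteq> (\<lambda>_. 0)" and e2: "lin a1 e2 = 0" "lin a2 e2 = 1"
  shows "card {x. lin a1 x = 0 \<and> lin a2 x = 0} = 16"
proof -
  have "card {x. lin a1 x = 0} = card (UNIV::'a set) * card {x\<in>{x. lin a1 x = 0}. lin a2 x = 0}"
  proof (rule card_fibers[where tr="\<lambda>b x i. x i + b * e2 i"])
    fix b :: 'a
    have "bij_betw (\<lambda>x i. x i + b * e2 i) {x\<in>{x. lin a1 x = 0}. lin a2 x = 0} {x\<in>{x. lin a1 x = 0}. lin a2 x = 0 + b}"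
      by (rule tbij) (simp_all add: lin_add lin_scale e2)
    then show "bij_betw (\<lambda>x i. x i + b * e2 i) {x\<in>{x. lin a1 x = 0}. lin a2 x = 0} {x\<in>{x. lin a1 x = 0}. lin a2 x = b}" by simp
  qed auto
  then show ?thesis using card_hyp[OF a1] card4 by simp
qed

end

context S4 begin

lemma nz_scale: "(c::'a) \<noteq> 0 \<Longrightarrow> x \<noteq> (\<lambda>_. 0) \<Longrightarrow> (\<lambda>i. c * x i) \<noteq> (\<lambda>_. 0)"
proof
  assume c: "c \<noteq> 0" and x: "x \<noteq> (\<lambda>_. 0)" and e: "(\<lambda>i. c * x i) = (\<lambda>_. 0)"
  then have "\<forall>i. c * x i = 0" by metis
  then have "x = (\<lambda>_. 0)" using c by auto
  then show False using x by simp
qed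

lemma line_contra:
  assumes tp: "tang a p" and tq: "tang a q" and pq: "proj_pt p \<noteq> proj_pt q"
    and z: "FF (\<lambda>i. p i + q i) = 0"
  shows False
proof -
  have "contains_rat_line f"
  proof (rule noline)
    show "p \<noteq> (\<lambda>_. 0)" "q \<noteq> (\<lambda>_. 0)" "FF q = 0" using tp tq unfolding tang_def by auto
    show "proj_pt p \<noteq> proj_pt q" by fact
    show "\<forall>u. FF (\<lambda>i. p i + u * q i) = 0" using secant[OF tp tq] z by simp
  qed
  then show False using no_rat_line by simp
qed

lemma col:
  assumes tp: "tang a p" and tq: "tang a q" and tr: "tang a r"
    and pq: "proj_pt p \<noteq> proj_pt q" and pr: "proj_pt p \<noteq> proj_pt r" and qr: "proj_pt q \<noteq> proj_pt r"
  shows "r \<noteq> (\<lambda>i. al * p i + be * q i)"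
proof
  assume r: "r = (\<lambda>i. al * p i + be * q i)"
  have r0: "r \<noteq> (\<lambda>_. 0)" and fr: "FF r = 0" using tr unfolding tang_def by auto
  show False
  proof (cases "al = 0")
    case True
    show False
    proof (cases "be = 0")
      case True
      then show False using r r0 \<open>al = 0\<close> by simp
    next
      case False
      have "r = (\<lambda>i. be * q i)" using r \<open>al = 0\<close> by simp
      then have "proj_pt r = proj_pt q" using proj_scale[OF False] by simp
      then show False using qr by simp
    qed
  next
    case al: False
    show False
    proof (cases "be = 0")
      case True
      have "r = (\<lambda>i. al * p i)" using r True by simp
      then have "proj_pt r = proj_pt p" using proj_scale[OF al] by simp
      then show False using pr by simp
    next
      case be: False
      have "r = (\<lambda>i. al * (p i + (be / al) * q i))" using r al by (simp add: distrib_left)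
      then have "FF r = al * FF (\<lambda>i. p i + (be / al) * q i)" using homF by simp
      also have "\<dots> = al * ((be / al) * (be / al) * FF (\<lambda>i. p i + q i))" by (simp only: secant[OF tp tq])
      finally have "FF (\<lambda>i. p i + q i) = 0" using fr al be by simp
      then show False using line_contra[OF tp tq pq] by simp
    qed
  qed
qed

lemma span3:
  fixes a :: "4 \<Rightarrow> 'a"
  assumes a: "a \<noteq> (\<lambda>_. 0)" and t1: "tang a q1" and t2: "tang a q2" and t3: "tang a q3"
    and d12: "proj_pt q1 \<noteq> proj_pt q2" and d13: "proj_pt q1 \<noteq> proj_pt q3" and d23: "proj_pt q2 \<noteq> proj_pt q3"
  shows "{x. lin a x = 0} = (\<lambda>(u, v, w). comb q1 q2 q3 u v w) ` UNIV"
proof -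
  have indep: "al = 0 \<and> be = 0 \<and> ga = 0" if e: "comb q1 q2 q3 al be ga = (\<lambda>_. 0)" for al be ga
  proof -
    have ei: "al * q1 i + be * q2 i + ga * q3 i = 0" for i using e unfolding comb_def by metis
    have q10: "q1 \<noteq> (\<lambda>_. 0)" using t1 unfolding tang_def by auto
    have "ga = 0"
    proof (rule ccontr)
      assume g: "ga \<noteq> 0"
      have "q3 = (\<lambda>i. (al / ga) * q1 i + (be / ga) * q2 i)"
      proof
        fix i
        have "al * q1 i + be * q2 i = ga * q3 i" using ei[of i] by (simp only: add0_iff)
        then have "ga * q3 i = al * q1 i + be * q2 i" by simp
        then show "q3 i = (al / ga) * q1 i + (be / ga) * q2 i" using g by (simp add: field_simps)
      qed
      then show False using col[OF t1 t2 t3 d12 d13 d23] by blast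
    qed
    moreover have "be = 0"
    proof (rule ccontr)
      assume b: "be \<noteq> 0"
      have "q2 = (\<lambda>i. (al / be) * q1 i + 0 * q3 i)"
      proof
        fix i
        have "al * q1 i + be * q2 i = 0" using ei[of i] \<open>ga = 0\<close> by simp
        then have "be * q2 i = al * q1 i" by (simp only: add0_iff)
        then show "q2 i = (al / be) * q1 i + 0 * q3 i" using b by (simp add: field_simps)
      qed
      then show False using col[OF t1 t3 t2 d13 d12 d23[symmetric]] by blast
    qed
    moreover have "al = 0"
    proof (rule ccontr)
      assume "al \<noteq> 0"
      then have "q1 = (\<lambda>_. 0)" using ei \<open>ga = 0\<close> \<open>be = 0\<close> by auto
      then show False using q10 by simp
    qed
    ultimately show ?thesis by simp
  qed
  have inj: "inj (\<lambda>(u, v, w). comb q1 q2 q3 u v w)"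
  proof (rule injI)
    fix x y :: "'a \<times> 'a \<times> 'a"
    assume e: "(\<lambda>(u, v, w). comb q1 q2 q3 u v w) x = (\<lambda>(u, v, w). comb q1 q2 q3 u v w) y"
    obtain u v w where x: "x = (u, v, w)" by (cases x) auto
    obtain u' v' w' where y: "y = (u', v', w')" by (cases y) auto
    have "comb q1 q2 q3 (u + u') (v + v') (w + w') = (\<lambda>_. 0)"
    proof
      fix i
      have "comb q1 q2 q3 u v w i = comb q1 q2 q3 u' v' w' i" using e x y by simp
      then have h: "comb q1 q2 q3 u v w i + comb q1 q2 q3 u' v' w' i = 0" by (rule eq0)
      show "comb q1 q2 q3 (u + u') (v + v') (w + w') i = 0"
        using h unfolding comb_def by (simp add: algebra_simps)
    qed
    then have "u + u' = 0 \<and> v + v' = 0 \<and> w + w' = 0" by (rule indep)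
    then show "x = y" using x y by (simp add: add0_iff)
  qed
  have sub: "(\<lambda>(u, v, w). comb q1 q2 q3 u v w) ` UNIV \<subseteq> {x. lin a x = 0}"
    using tang_in[OF t1] tang_in[OF t2] tang_in[OF t3] by (auto simp: lin_comb)
  have "card ((\<lambda>(u, v, w). comb q1 q2 q3 u v w) ` UNIV) = card (UNIV :: ('a \<times> 'a \<times> 'a) set)"
    by (rule card_image[OF inj])
  also have "\<dots> = 64" using card4 by simp
  finally have c: "card ((\<lambda>(u, v, w). comb q1 q2 q3 u v w) ` UNIV) = card {x. lin a x = 0}" using card_hyp[OF a] by simp
  show ?thesis using card_subset_eq[OF _ sub c] by simp
qed

end

lemma comb_lin: "comb q1 q2 q3 (a1 + t * b1) (a2 + t * b2) (a3 + t * b3) = (\<lambda>i. comb q1 q2 q3 a1 a2 a3 i + t * comb q1 q2 q3 b1 b2 b3 i)"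
  by (simp add: comb_def algebra_simps fun_eq_iff)
lemma comb_add: "comb q1 q2 q3 (a1 + b1) (a2 + b2) (a3 + b3) = (\<lambda>i. comb q1 q2 q3 a1 a2 a3 i + comb q1 q2 q3 b1 b2 b3 i)"
  by (simp add: comb_def algebra_simps fun_eq_iff)
lemma comb_scale: "comb q1 q2 q3 (c * u) (c * v) (c * w) = (\<lambda>i. c * comb q1 q2 q3 u v w i)"
  by (simp add: comb_def algebra_simps fun_eq_iff)

context S4 begin

lemma plane_core:
  fixes a :: "4 \<Rightarrow> 'a"
  assumes a: "a \<noteq> (\<lambda>_. 0)"
    and t1: "tang a p1" and t2: "tang a p2" and t3: "tang a p3" and t4: "tang a p4" and t5: "tang a p5"
    and dist: "distinct [proj_pt p1, proj_pt p2, proj_pt p3, proj_pt p4, proj_pt p5]"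
    and x: "x \<noteq> (\<lambda>_. 0)" "FF x = 0" "lin a x = 0"
  shows "tang a x"
proof -
  from dist have d12: "proj_pt p1 \<noteq> proj_pt p2" and d13: "proj_pt p1 \<noteq> proj_pt p3" and d14: "proj_pt p1 \<noteq> proj_pt p4"
    and d15: "proj_pt p1 \<noteq> proj_pt p5" and d23: "proj_pt p2 \<noteq> proj_pt p3" and d24: "proj_pt p2 \<noteq> proj_pt p4"
    and d25: "proj_pt p2 \<noteq> proj_pt p5" and d34: "proj_pt p3 \<noteq> proj_pt p4" and d35: "proj_pt p3 \<noteq> proj_pt p5"
    and d45: "proj_pt p4 \<noteq> proj_pt p5" by auto
  have H1: "{x. lin a x = 0} = (\<lambda>(u, v, w). comb p1 p2 p3 u v w) ` UNIV"
    by (rule span3[OF a t1 t2 t3 d12 d13 d23])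
  have "p4 \<in> {x. lin a x = 0}" using tang_in[OF t4] by simp
  then obtain al be ga where p4: "p4 = comb p1 p2 p3 al be ga" unfolding H1 by auto
  have al: "al \<noteq> 0"
  proof
    assume "al = 0"
    then have "p4 = (\<lambda>i. be * p2 i + ga * p3 i)" using p4 by (simp add: comb_def)
    then show False using col[OF t2 t3 t4 d23 d24 d34] by blast
  qed
  have be: "be \<noteq> 0"
  proof
    assume "be = 0"
    then have "p4 = (\<lambda>i. al * p1 i + ga * p3 i)" using p4 by (simp add: comb_def)
    then show False using col[OF t1 t3 t4 d13 d14 d34] by blast
  qed
  have ga: "ga \<noteq> 0"
  proof
    assume "ga = 0"
    then have "p4 = (\<lambda>i. al * p1 i + be * p2 i)" using p4 by (simp add: comb_def)
    then show False using col[OF t1 t2 t4 d12 d14 d24] by blast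
  qed
  define q1 where "q1 = (\<lambda>i. al * p1 i)"
  define q2 where "q2 = (\<lambda>i. be * p2 i)"
  define q3 where "q3 = (\<lambda>i. ga * p3 i)"
  have s1: "tang a q1" "proj_pt q1 = proj_pt p1" unfolding q1_def using tang_scale[OF t1 al] proj_scale[OF al] by auto
  have s2: "tang a q2" "proj_pt q2 = proj_pt p2" unfolding q2_def using tang_scale[OF t2 be] proj_scale[OF be] by auto
  have s3: "tang a q3" "proj_pt q3 = proj_pt p3" unfolding q3_def using tang_scale[OF t3 ga] proj_scale[OF ga] by auto
  have p4q: "p4 = comb q1 q2 q3 1 1 1" unfolding p4 q1_def q2_def q3_def comb_def by simp
  have H: "{x. lin a x = 0} = (\<lambda>(u, v, w). comb q1 q2 q3 u v w) ` UNIV"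
    by (rule span3[OF a s1(1) s2(1) s3(1)]) (use d12 d13 d23 s1 s2 s3 in auto)
  have "p5 \<in> {x. lin a x = 0}" using tang_in[OF t5] by simp
  then obtain al' be' ga' where p5: "p5 = comb q1 q2 q3 al' be' ga'" unfolding H by auto
  have e12: "proj_pt q1 \<noteq> proj_pt q2" "proj_pt q1 \<noteq> proj_pt q3" "proj_pt q2 \<noteq> proj_pt q3"
    "proj_pt q1 \<noteq> proj_pt p5" "proj_pt q2 \<noteq> proj_pt p5" "proj_pt q3 \<noteq> proj_pt p5"
    "proj_pt p4 \<noteq> proj_pt q1" "proj_pt p4 \<noteq> proj_pt q2" "proj_pt p4 \<noteq> proj_pt q3" "proj_pt p4 \<noteq> proj_pt p5"
    using s1 s2 s3 d12 d13 d23 d15 d25 d35 d14 d24 d34 d45 by auto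
  have al': "al' \<noteq> 0"
  proof
    assume "al' = 0"
    then have "p5 = (\<lambda>i. be' * q2 i + ga' * q3 i)" using p5 by (simp add: comb_def)
    then show False using col[OF s2(1) s3(1) t5 e12(3) e12(5) e12(6)] by blast
  qed
  have be': "be' \<noteq> 0"
  proof
    assume "be' = 0"
    then have "p5 = (\<lambda>i. al' * q1 i + ga' * q3 i)" using p5 by (simp add: comb_def)
    then show False using col[OF s1(1) s3(1) t5 e12(2) e12(4) e12(6)] by blast
  qed
  have ga': "ga' \<noteq> 0"
  proof
    assume "ga' = 0"
    then have "p5 = (\<lambda>i. al' * q1 i + be' * q2 i)" using p5 by (simp add: comb_def)
    then show False using col[OF s1(1) s2(1) t5 e12(1) e12(4) e12(5)] by blast
  qed
  have ab: "al' \<noteq> be'"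
  proof
    assume e: "al' = be'"
    have "p5 = (\<lambda>i. al' * p4 i + (ga' + al') * q3 i)" using p5 p4q e by (simp add: comb_def fun_eq_iff algebra_simps)
    then show False using col[OF t4 s3(1) t5 e12(9) e12(10) e12(6)] by blast
  qed
  have ag: "al' \<noteq> ga'"
  proof
    assume e: "al' = ga'"
    have "p5 = (\<lambda>i. al' * p4 i + (be' + al') * q2 i)" using p5 p4q e by (simp add: comb_def fun_eq_iff algebra_simps)
    then show False using col[OF t4 s2(1) t5 e12(8) e12(10) e12(5)] by blast
  qed
  have bg: "be' \<noteq> ga'"
  proof
    assume e: "be' = ga'"
    have "p5 = (\<lambda>i. be' * p4 i + (al' + be') * q1 i)" using p5 p4q e by (simp add: comb_def fun_eq_iff algebra_simps)
    then show False using col[OF t4 s1(1) t5 e12(7) e12(10) e12(4)] by blast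
  qed
  define b where "b = be' / al'"
  define c where "c = ga' / al'"
  define q5 where "q5 = (\<lambda>i. inverse al' * p5 i)"
  have s5: "tang a q5" unfolding q5_def using tang_scale[OF t5] al' by simp
  have q5c: "q5 = comb q1 q2 q3 1 b c" unfolding q5_def p5 b_def c_def comb_def using al'
    by (simp add: fun_eq_iff field_simps)
  have b01: "b \<noteq> 0" "b \<noteq> 1" "c \<noteq> 0" "c \<noteq> 1" "b \<noteq> c" unfolding b_def c_def using al' be' ga' ab ag bg
    by (auto simp: field_simps)
  have bc: "b * b = b + 1 \<and> c = b * b"
  proof -
    have "b = om \<or> b = om + 1" using univ4[of b] b01 by auto
    moreover have "c = om \<or> c = om + 1" using univ4[of c] b01 by auto
    ultimately show ?thesis using b01 omsq by (auto simp: algebra_simps)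
  qed
  interpret Fb: F4 b using bc card4 by unfold_locales auto
  define P where "P = (\<lambda>u v w. FF (comb q1 q2 q3 u v w))"
  have tTT: "tang a (comb q1 q2 q3 a1 a2 a3)" if "(a1, a2, a3) \<in> {(1,0,0),(0,1,0),(0,0,1),(1,1,1),(1,b,b*b)}" for a1 a2 a3
  proof -
    have "comb q1 q2 q3 1 0 0 = q1" "comb q1 q2 q3 0 1 0 = q2" "comb q1 q2 q3 0 0 1 = q3"
      by (simp_all add: comb_def)
    then show ?thesis using that s1 s2 s3 s5 t4 p4q q5c bc by auto
  qed
  have inH: "lin a (comb q1 q2 q3 u v w) = 0" for u v w
    using tang_in[OF s1(1)] tang_in[OF s2(1)] tang_in[OF s3(1)] by (simp add: lin_comb)
  have "x \<in> {x. lin a x = 0}" using x(3) by simp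
  then obtain u v w where xc: "x = comb q1 q2 q3 u v w" unfolding H by auto
  have "(u = 0 \<and> v = 0 \<and> w = 0) \<or> (\<exists>c a1 a2 a3. (a1,a2,a3) \<in> {(1,0,0),(0,1,0),(0,0,1),(1,1,1),(1,b,b*b)} \<and> u = c*a1 \<and> v = c*a2 \<and> w = c*a3) \<or> P 1 1 0 = 0"
  proof (rule Fb.nucleus[of P u v w])
    show "P (cc * x1) (cc * x2) (cc * x3) = cc * P x1 x2 x3" for cc x1 x2 x3
      unfolding P_def comb_scale homF ..
    show "P a1 a2 a3 = 0" if "(a1, a2, a3) \<in> {(1,0,0),(0,1,0),(0,0,1),(1,1,1),(1,b,b*b)}" for a1 a2 a3
      using tTT[OF that] unfolding P_def tang_def by simp
    show "P (a1 + t * b1) (a2 + t * b2) (a3 + t * b3) = t * t * P (a1 + b1) (a2 + b2) (a3 + b3)"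
      if "(a1, a2, a3) \<in> {(1,0,0),(0,1,0),(0,0,1),(1,1,1),(1,b,b*b)}" "(b1, b2, b3) \<in> {(1,0,0),(0,1,0),(0,0,1),(1,1,1),(1,b,b*b)}"
      for a1 a2 a3 b1 b2 b3 t
      unfolding P_def comb_lin comb_add[of _ _ _ a1 b1 a2 b2 a3 b3] by (rule secant[OF tTT[OF that(1)] tTT[OF that(2)]])
    show "P (a1 + y1) (a2 + y2) (a3 + y3) + (b + 1) * P (a1 + b * y1) (a2 + b * y2) (a3 + b * y3) +
          b * P (a1 + (b + 1) * y1) (a2 + (b + 1) * y2) (a3 + (b + 1) * y3) = P y1 y2 y3"
      if "(a1, a2, a3) \<in> {(1,0,0),(0,1,0),(0,0,1),(1,1,1),(1,b,b*b)}" for a1 a2 a3 y1 y2 y3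
    proof -
      have "comb q1 q2 q3 (a1 + y1) (a2 + y2) (a3 + y3) = (\<lambda>i. comb q1 q2 q3 a1 a2 a3 i + comb q1 q2 q3 y1 y2 y3 i)"
        by (rule comb_add)
      then show ?thesis unfolding P_def comb_lin
        using tanl[OF tTT[OF that] inH[of y1 y2 y3], of b] bc by simp
    qed
    show "P u v w = 0" unfolding P_def xc[symmetric] by (rule x(2))
  qed
  then show ?thesis
  proof (elim disjE)
    assume "u = 0 \<and> v = 0 \<and> w = 0"
    then have "x = (\<lambda>_. 0)" unfolding xc comb_def by simp
    then show ?thesis using x(1) by simp
  next
    assume "\<exists>c a1 a2 a3. (a1,a2,a3) \<in> {(1,0,0),(0,1,0),(0,0,1),(1,1,1),(1,b,b*b)} \<and> u = c*a1 \<and> v = c*a2 \<and> w = c*a3"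
    then obtain cc a1 a2 a3 where m: "(a1,a2,a3) \<in> {(1,0,0),(0,1,0),(0,0,1),(1,1,1),(1,b,b*b)}" and uvw: "u = cc*a1" "v = cc*a2" "w = cc*a3"
      by blast
    have xe: "x = (\<lambda>i. cc * comb q1 q2 q3 a1 a2 a3 i)" unfolding xc uvw comb_scale ..
    have "cc \<noteq> 0" using x(1) xe by auto
    then show ?thesis unfolding xe by (rule tang_scale[OF tTT[OF m]])
  next
    assume "P 1 1 0 = 0"
    then have "FF (\<lambda>i. q1 i + q2 i) = 0" unfolding P_def comb_def by simp
    then show ?thesis using line_contra[OF s1(1) s2(1)] e12(1) by simp
  qed
qed

end

lemma length5: "length xs = 5 \<Longrightarrow> \<exists>t1 t2 t3 t4 t5. xs = [t1, t2, t3, t4, t5]"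
  by (auto simp: length_Suc_conv numeral_eq_Suc)

context S4 begin

definition RP where "RP a = {proj_pt x | x. x \<noteq> (\<lambda>_. 0) \<and> FF x = 0 \<and> lin a x = 0}"
definition TC where "TC a = {proj_pt x | x. x \<noteq> (\<lambda>_. 0) \<and> FF x = 0 \<and> tangent_plane f x = proj_pt a}"

lemma tc_elem: "T \<in> TC a \<Longrightarrow> \<exists>p. T = proj_pt p \<and> tang a p"
proof -
  assume "T \<in> TC a"
  then obtain x where x: "T = proj_pt x" "x \<noteq> (\<lambda>_. 0)" "FF x = 0" "proj_pt (grad f x) = proj_pt a"
    unfolding TC_def tangent_plane_def by auto
  obtain c where c: "c \<noteq> 0" "a = (\<lambda>i. c * grad f x i)" using proj_eqD[OF x(4)] by auto
  have g: "grad f x = (\<lambda>i. inverse c * a i)" using c by (simp add: fun_eq_iff)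
  have "tang a x" unfolding tang_def by (intro conjI exI[of _ "inverse c"]) (simp_all add: g c(1) x(2) x(3))
  then show ?thesis using x by auto
qed

lemma tang_tc: "tang a p \<Longrightarrow> proj_pt p \<in> TC a"
proof -
  assume t: "tang a p"
  then obtain c where c: "c \<noteq> 0" "grad f p = (\<lambda>i. c * a i)" and p: "p \<noteq> (\<lambda>_. 0)" "FF p = 0" unfolding tang_def by auto
  have "tangent_plane f p = proj_pt a" unfolding tangent_plane_def c(2) by (rule proj_scale[OF c(1)])
  then show ?thesis using p unfolding TC_def by auto
qed

lemma plane_main:
  fixes a :: "4 \<Rightarrow> 'a"
  assumes a: "a \<noteq> (\<lambda>_. 0)" and tc: "tcount f a = 5"
  shows "\<forall>x. x \<noteq> (\<lambda>_. 0) \<and> FF x = 0 \<and> lin a x = 0 \<longrightarrow> tang a x"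
proof -
  have c5: "card (TC a) = 5" using tc unfolding tcount_def TC_def by simp
  then have fin: "finite (TC a)" by (intro card_ge_0_finite) simp
  obtain xs where xs: "set xs = TC a" "distinct xs" using finite_distinct_list[OF fin] by auto
  have len: "length xs = 5" using distinct_card[OF xs(2)] xs(1) c5 by simp
  from length5[OF len] obtain T1 T2 T3 T4 T5 where xs5: "xs = [T1, T2, T3, T4, T5]" by (elim exE) simp
  have mem: "T1 \<in> TC a" "T2 \<in> TC a" "T3 \<in> TC a" "T4 \<in> TC a" "T5 \<in> TC a" by (simp_all add: xs(1)[symmetric] xs5)
  obtain p1 where p1: "T1 = proj_pt p1" "tang a p1" using tc_elem[OF mem(1)] by blast
  obtain p2 where p2: "T2 = proj_pt p2" "tang a p2" using tc_elem[OF mem(2)] by blast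
  obtain p3 where p3: "T3 = proj_pt p3" "tang a p3" using tc_elem[OF mem(3)] by blast
  obtain p4 where p4: "T4 = proj_pt p4" "tang a p4" using tc_elem[OF mem(4)] by blast
  obtain p5 where p5: "T5 = proj_pt p5" "tang a p5" using tc_elem[OF mem(5)] by blast
  have d: "distinct [proj_pt p1, proj_pt p2, proj_pt p3, proj_pt p4, proj_pt p5]"
    using xs(2) unfolding xs5 p1(1) p2(1) p3(1) p4(1) p5(1) .
  show ?thesis
  proof (intro allI impI)
    fix x assume "x \<noteq> (\<lambda>_. 0) \<and> FF x = 0 \<and> lin a x = 0"
    then show "tang a x" using plane_core[OF a p1(2) p2(2) p3(2) p4(2) p5(2) d, of x] by simp
  qed
qed

lemma RP_TC:
  fixes a :: "4 \<Rightarrow> 'a"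
  assumes a: "a \<noteq> (\<lambda>_. 0)" and tc: "tcount f a = 5"
  shows "RP a = TC a" "card (RP a) = 5"
proof -
  show e: "RP a = TC a"
  proof (rule Set.set_eqI, rule iffI)
    fix T assume "T \<in> RP a"
    then obtain x where "T = proj_pt x" "x \<noteq> (\<lambda>_. 0)" "FF x = 0" "lin a x = 0" unfolding RP_def by auto
    then show "T \<in> TC a" using plane_main[OF a tc] tang_tc by auto
  next
    fix T assume "T \<in> TC a"
    then obtain p where "T = proj_pt p" "tang a p" using tc_elem by blast
    then show "T \<in> RP a" using tang_in unfolding RP_def tang_def by auto
  qed
  show "card (RP a) = 5" using tc unfolding e tcount_def TC_def by simp
qed

lemma part1:
  fixes a1 a2 :: "4 \<Rightarrow> 'a"
  assumes a1: "a1 \<noteq> (\<lambda>_. 0)" and a2: "a2 \<noteq> (\<lambda>_. 0)" and d: "proj_pt a1 \<noteq> proj_pt a2"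
    and tc1: "tcount f a1 = 5" and tc2: "tcount f a2 = 5"
  shows "\<not> (\<exists>x. x \<noteq> (\<lambda>_. 0) \<and> FF x = 0 \<and> lin a1 x = 0 \<and> lin a2 x = 0)"
proof
  assume "\<exists>x. x \<noteq> (\<lambda>_. 0) \<and> FF x = 0 \<and> lin a1 x = 0 \<and> lin a2 x = 0"
  then obtain x where x: "x \<noteq> (\<lambda>_. 0)" "FF x = 0" "lin a1 x = 0" "lin a2 x = 0" by blast
  have "tang a1 x" "tang a2 x" using plane_main[OF a1 tc1] plane_main[OF a2 tc2] x by auto
  then obtain c1 c2 where c: "c1 \<noteq> 0" "grad f x = (\<lambda>i. c1 * a1 i)" "c2 \<noteq> 0" "grad f x = (\<lambda>i. c2 * a2 i)"
    unfolding tang_def by auto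
  have "a1 = (\<lambda>i. (c2 / c1) * a2 i)"
  proof
    fix i
    have "c1 * a1 i = c2 * a2 i" using fun_cong[OF trans[OF c(2)[symmetric] c(4)], of i] by simp
    then show "a1 i = (c2 / c1) * a2 i" using c(1) by (simp add: field_simps)
  qed
  then have "proj_pt a1 = proj_pt a2" using proj_scale[of "c2 / c1" a2] c by simp
  then show False using d by simp
qed

end

lemma three_elems:
  assumes "finite S" "3 \<le> card S"
  shows "\<exists>x y z. x \<in> S \<and> y \<in> S \<and> z \<in> S \<and> x \<noteq> y \<and> x \<noteq> z \<and> y \<noteq> z"
proof -
  obtain xs where xs: "set xs = S" "distinct xs" using finite_distinct_list[OF assms(1)] by auto
  have "3 \<le> length xs" using distinct_card[OF xs(2)] xs(1) assms(2) by simp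
  then have "xs ! 0 \<in> S" "xs ! 1 \<in> S" "xs ! 2 \<in> S" unfolding xs(1)[symmetric] by (auto intro!: nth_mem)
  moreover have "xs ! 0 \<noteq> xs ! 1" "xs ! 0 \<noteq> xs ! 2" "xs ! 1 \<noteq> xs ! 2"
  proof -
    have l: "0 < length xs" "1 < length xs" "2 < length xs" using \<open>3 \<le> length xs\<close> by linarith+
    show "xs ! 0 \<noteq> xs ! 1" using nth_eq_iff_index_eq[OF xs(2) l(1) l(2)] by simp
    show "xs ! 0 \<noteq> xs ! 2" using nth_eq_iff_index_eq[OF xs(2) l(1) l(3)] by simp
    show "xs ! 1 \<noteq> xs ! 2" using nth_eq_iff_index_eq[OF xs(2) l(2) l(3)] by simp
  qed
  ultimately show ?thesis by blast
qed

lemma two_elems: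
  assumes "finite S" "2 \<le> card S"
  shows "\<exists>x y. x \<in> S \<and> y \<in> S \<and> x \<noteq> y"
proof -
  obtain xs where xs: "set xs = S" "distinct xs" using finite_distinct_list[OF assms(1)] by auto
  have "2 \<le> length xs" using distinct_card[OF xs(2)] xs(1) assms(2) by simp
  then have "xs ! 0 \<in> S" "xs ! 1 \<in> S" unfolding xs(1)[symmetric] by (auto intro!: nth_mem)
  moreover have "xs ! 0 \<noteq> xs ! 1"
  proof -
    have l: "0 < length xs" "1 < length xs" using \<open>2 \<le> length xs\<close> by linarith+
    show ?thesis using nth_eq_iff_index_eq[OF xs(2) l(1) l(2)] by simp
  qed
  ultimately show ?thesis by blast
qed

context S4 begin

lemma g_lin3: "g x (\<lambda>i. y i + u * z i + v * w i) = g x y + u * g x z + v * g x w"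
  unfolding g_def lin_def by (simp add: algebra_simps sum.distrib sum_distrib_left)

lemma FL:
  assumes fa: "FF A = 0" and full: "\<forall>s. FF (\<lambda>i. A i + s * D i) = 0"
  shows "g A D = FF D \<and> g D A = 0"
proof -
  have h1: "FF A + g A D * 1 + c2 A D * 1^2 + g D A * 1^3 + FF D * 1 = 0" using EXP[of A 1 D] full[rule_format, of 1] by simp
  have e1: "g D A + (g A D + FF D) * 1 + c2 A D * 1 * 1 = 0" using h1 fa by (simp add: algebra_simps)
  have h2: "FF A + g A D * om + c2 A D * om^2 + g D A * om^3 + FF D * om = 0" using EXP[of A om D] full[rule_format, of om] by simp
  have e2: "g D A + (g A D + FF D) * om + c2 A D * om * om = 0" using h2 fa by (simp add: algebra_simps eval_nat_numeral omsq)
  have h3: "FF A + g A D * (om+1) + c2 A D * (om+1)^2 + g D A * (om+1)^3 + FF D * (om+1) = 0" using EXP[of A "om+1" D] full[rule_format, of "om+1"] by simp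
  have e3: "g D A + (g A D + FF D) * (om+1) + c2 A D * (om+1) * (om+1) = 0" using h3 fa by (simp add: algebra_simps eval_nat_numeral omsq)
  have "g D A = 0 \<and> g A D + FF D = 0" using quad0[OF e1[simplified] e2 e3] by simp
  then show ?thesis by (simp add: add0_iff)
qed

lemma C0:
  assumes dist: "d1 \<noteq> d2" "d1 \<noteq> d3" "d2 \<noteq> d3"
    and agS: "\<And>s. Some s \<in> {d1, d2, d3} \<Longrightarrow> l1 + s * l2 = f1 + C * s^2 + f2 * s"
    and agN: "None \<in> {d1, d2, d3} \<Longrightarrow> l2 = f2"
  shows "C = (0::'a)"
proof (cases "None \<in> {d1, d2, d3}")
  case True
  have "\<exists>s t. s \<noteq> t \<and> Some s \<in> {d1, d2, d3} \<and> Some t \<in> {d1, d2, d3}"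
    using True dist by (cases d1; cases d2; cases d3) auto
  then obtain s t where st: "s \<noteq> t" "Some s \<in> {d1, d2, d3}" "Some t \<in> {d1, d2, d3}" by blast
  have l2: "l2 = f2" using agN True by simp
  have es: "l1 = f1 + C * s^2" using agS[OF st(2)] l2 by (simp add: algebra_simps)
  have et: "l1 = f1 + C * t^2" using agS[OF st(3)] l2 by (simp add: algebra_simps)
  have "C * s^2 + C * t^2 = 0" using es et by (metis add.assoc xx xxy add.commute)
  then have "C * ((s + t) * (s + t)) = 0" by (simp add: algebra_simps power2_eq_square)
  moreover have "s + t \<noteq> 0" using st(1) by (simp add: add0_iff)
  ultimately show ?thesis by simp
next
  case False
  then obtain s t r where d: "d1 = Some s" "d2 = Some t" "d3 = Some r" by (cases d1; cases d2; cases d3) auto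
  have st: "s \<noteq> t" "s \<noteq> r" "t \<noteq> r" using dist d by auto
  have E: "(f1 + l1) + (f2 + l2) * x + C * x^2 = 0" if "Some x \<in> {d1, d2, d3}" for x
    using eq0[OF agS[OF that]] by (simp add: algebra_simps)
  have Es: "(f1 + l1) + (f2 + l2) * s + C * s^2 = 0" and Et: "(f1 + l1) + (f2 + l2) * t + C * t^2 = 0"
    and Er: "(f1 + l1) + (f2 + l2) * r + C * r^2 = 0" using E d by auto
  have "((f1 + l1) + (f2 + l2) * s + C * s^2) + ((f1 + l1) + (f2 + l2) * t + C * t^2) = 0" using Es Et by simp
  then have "(s + t) * ((f2 + l2) + C * (s + t)) = 0" by (simp add: algebra_simps power2_eq_square)
  then have a1: "(f2 + l2) + C * (s + t) = 0" using st(1) by (simp add: add0_iff)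
  have "((f1 + l1) + (f2 + l2) * s + C * s^2) + ((f1 + l1) + (f2 + l2) * r + C * r^2) = 0" using Es Er by simp
  then have "(s + r) * ((f2 + l2) + C * (s + r)) = 0" by (simp add: algebra_simps power2_eq_square)
  then have a2: "(f2 + l2) + C * (s + r) = 0" using st(2) by (simp add: add0_iff)
  have "((f2 + l2) + C * (s + t)) + ((f2 + l2) + C * (s + r)) = 0" using a1 a2 by simp
  then have "C * (t + r) = 0" by (simp add: algebra_simps)
  then show ?thesis using st(3) by (simp add: add0_iff)
qed

end
context S4 begin

lemma plane2:
  fixes A0 D1 D2 :: "4 \<Rightarrow> 'a"
  assumes Vnz: "\<And>u v. (u, v) \<noteq> (0, 0) \<Longrightarrow> FF (\<lambda>i. u * D1 i + v * D2 i) \<noteq> 0"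
  shows "card {p :: 'a \<times> 'a. FF (\<lambda>i. A0 i + fst p * D1 i + snd p * D2 i) = 0} \<le> 13"
proof (rule ccontr)
  define vec where "vec u v = (\<lambda>i. A0 i + u * D1 i + v * D2 i)" for u v
  define Z where "Z = {p :: 'a \<times> 'a. FF (vec (fst p) (snd p)) = 0}"
  define M where "M = UNIV - Z"
  assume "\<not> card {p :: 'a \<times> 'a. FF (\<lambda>i. A0 i + fst p * D1 i + snd p * D2 i) = 0} \<le> 13"
  then have cZ: "14 \<le> card Z" unfolding Z_def vec_def by simp
  have cU: "card (UNIV :: ('a \<times> 'a) set) = 16" using card4 by simp
  have cM: "card M \<le> 2"
  proof -
    have "card M = card (UNIV :: ('a \<times> 'a) set) - card Z" unfolding M_def by (rule card_Diff_subset) auto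
    then show ?thesis using cZ cU by simp
  qed
  have fM: "finite M" by simp
  have inZ: "p \<notin> M \<Longrightarrow> FF (vec (fst p) (snd p)) = 0" for p unfolding M_def Z_def by auto
  have f2nz: "FF D2 \<noteq> 0" using Vnz[of 0 1] by simp
  have vl: "FF (\<lambda>i. D1 i + s * D2 i) \<noteq> 0" for s using Vnz[of 1 s] by simp
  have gx: "g x (vec u v) = g x A0 + u * g x D1 + v * g x D2" for x u v
    unfolding vec_def by (rule g_lin3)
  have b1: "g D1 D2 = 0"
  proof -
    have "card (snd ` M) \<le> 2" using card_image_le[OF fM, of snd] cM by simp
    then have "2 \<le> card (UNIV - snd ` M)" using card4 by (simp add: card_Diff_subset)
    then obtain v1 v2 where v: "v1 \<notin> snd ` M" "v2 \<notin> snd ` M" "v1 \<noteq> v2" using two_elems[of "UNIV - snd ` M"] by auto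
    have G: "g D1 (vec 0 v) = 0" if vn: "v \<notin> snd ` M" for v
    proof -
      have z: "FF (vec s v) = 0" for s
      proof -
        have "(s, v) \<notin> M"
        proof
          assume "(s, v) \<in> M"
          then have "v \<in> snd ` M" by (rule image_eqI[rotated]) simp
          then show False using vn by simp
        qed
        then show ?thesis using inZ[of "(s, v)"] by simp
      qed
      have e: "vec s v = (\<lambda>i. vec 0 v i + s * D1 i)" for s unfolding vec_def by (simp add: fun_eq_iff algebra_simps)
      have "g (vec 0 v) D1 = FF D1 \<and> g D1 (vec 0 v) = 0"
      proof (rule FL)
        show "FF (vec 0 v) = 0" by (rule z)
        show "\<forall>s. FF (\<lambda>i. vec 0 v i + s * D1 i) = 0"
        proof
          fix s show "FF (\<lambda>i. vec 0 v i + s * D1 i) = 0" using z[of s] unfolding e[of s] .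
        qed
      qed
      then show ?thesis by simp
    qed
    have "g D1 A0 + v1 * g D1 D2 = 0" "g D1 A0 + v2 * g D1 D2 = 0" using G[OF v(1)] G[OF v(2)] by (simp_all add: gx)
    then have "(g D1 A0 + v1 * g D1 D2) + (g D1 A0 + v2 * g D1 D2) = 0" by simp
    then have "(v1 + v2) * g D1 D2 = 0" by (simp add: algebra_simps)
    then show ?thesis using v(3) by (simp add: add0_iff)
  qed
  have b2: "g D2 D1 = 0"
  proof -
    have "card (fst ` M) \<le> 2" using card_image_le[OF fM, of fst] cM by simp
    then have "2 \<le> card (UNIV - fst ` M)" using card4 by (simp add: card_Diff_subset)
    then obtain u1 u2 where u: "u1 \<notin> fst ` M" "u2 \<notin> fst ` M" "u1 \<noteq> u2" using two_elems[of "UNIV - fst ` M"] by auto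
    have G: "g D2 (vec u 0) = 0" if un: "u \<notin> fst ` M" for u
    proof -
      have z: "FF (vec u s) = 0" for s
      proof -
        have "(u, s) \<notin> M"
        proof
          assume "(u, s) \<in> M"
          then have "u \<in> fst ` M" by (rule image_eqI[rotated]) simp
          then show False using un by simp
        qed
        then show ?thesis using inZ[of "(u, s)"] by simp
      qed
      have e: "vec u s = (\<lambda>i. vec u 0 i + s * D2 i)" for s unfolding vec_def by (simp add: fun_eq_iff algebra_simps)
      have "g (vec u 0) D2 = FF D2 \<and> g D2 (vec u 0) = 0"
      proof (rule FL)
        show "FF (vec u 0) = 0" by (rule z)
        show "\<forall>s. FF (\<lambda>i. vec u 0 i + s * D2 i) = 0"
        proof
          fix s show "FF (\<lambda>i. vec u 0 i + s * D2 i) = 0" using z[of s] unfolding e[of s] .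
        qed
      qed
      then show ?thesis by simp
    qed
    have "g D2 A0 + u1 * g D2 D1 = 0" "g D2 A0 + u2 * g D2 D1 = 0" using G[OF u(1)] G[OF u(2)] by (simp_all add: gx)
    then have "(g D2 A0 + u1 * g D2 D1) + (g D2 A0 + u2 * g D2 D1) = 0" by simp
    then have "(u1 + u2) * g D2 D1 = 0" by (simp add: algebra_simps)
    then show ?thesis using u(3) by (simp add: add0_iff)
  qed
  have "Z \<noteq> {}" using cZ by auto
  then obtain uA vA where pA: "(uA, vA) \<in> Z" by auto
  define A where "A = vec uA vA"
  have fA: "FF A = 0" using pA unfolding Z_def A_def by simp
  define dvec where "dvec d = (case d of None \<Rightarrow> D2 | Some s \<Rightarrow> (\<lambda>i. D1 i + s * D2 i))" for d
  define pt where "pt d s = (case d of None \<Rightarrow> (uA, vA + s) | Some t \<Rightarrow> (uA + s, vA + s * t))" for d s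
  have vec_pt: "vec (fst (pt d s)) (snd (pt d s)) = (\<lambda>i. A i + s * dvec d i)" for d s
    unfolding A_def vec_def pt_def dvec_def by (cases d) (simp_all add: fun_eq_iff algebra_simps)
  define full where "full d \<longleftrightarrow> (\<forall>s. pt d s \<notin> M)" for d
  define dir where "dir p = (if fst p = uA then None else Some ((snd p + vA) / (fst p + uA)))" for p
  have nonfull: "{d. \<not> full d} \<subseteq> dir ` M"
  proof
    fix d assume "d \<in> {d. \<not> full d}"
    then obtain s where s: "pt d s \<in> M" unfolding full_def by auto
    have "s \<noteq> 0"
    proof
      assume "s = 0"
      then have "pt d s = (uA, vA)" unfolding pt_def by (cases d) auto
      then show False using s pA unfolding M_def by auto
    qed
    then have "dir (pt d s) = d" unfolding dir_def pt_def by (cases d) (auto simp: add0_iff)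
    then show "d \<in> dir ` M" using s by force
  qed
  have "card {d. \<not> full d} \<le> 2"
    using card_mono[OF _ nonfull] card_image_le[OF fM, of dir] cM by simp
  moreover have "card {d. full d} = card (UNIV :: 'a option set) - card {d. \<not> full d}"
  proof -
    have "{d. full d} = UNIV - {d. \<not> full d}" by auto
    then show ?thesis by (simp add: card_Diff_subset)
  qed
  moreover have "card (UNIV :: 'a option set) = 5" using card4 by simp
  ultimately have "3 \<le> card {d. full d}" by linarith
  then obtain d1 d2 d3 where d: "full d1" "full d2" "full d3" "d1 \<noteq> d2" "d1 \<noteq> d3" "d2 \<noteq> d3"
    using three_elems[of "{d. full d}"] by auto
  have ag: "g A (dvec d) = FF (dvec d)" if "full d" for d
  proof -
    have "\<forall>s. FF (\<lambda>i. A i + s * dvec d i) = 0"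
    proof
      fix s
      have "pt d s \<notin> M" using that unfolding full_def by auto
      then show "FF (\<lambda>i. A i + s * dvec d i) = 0" using inZ[of "pt d s"] vec_pt by simp
    qed
    then show ?thesis using FL[OF fA] by blast
  qed
  have gS: "g A (dvec (Some s)) = g A D1 + s * g A D2" for s
    unfolding dvec_def g_def lin_def by (simp add: algebra_simps sum.distrib sum_distrib_left)
  have fS: "FF (dvec (Some s)) = FF D1 + c2 D1 D2 * s^2 + FF D2 * s" for s
    unfolding dvec_def using EXP[of D1 s D2] b1 b2 by simp
  have C: "c2 D1 D2 = 0"
  proof (rule C0[OF d(4) d(5) d(6)])
    fix s assume "Some s \<in> {d1, d2, d3}"
    then have "full (Some s)" using d by auto
    then show "g A D1 + s * g A D2 = FF D1 + c2 D1 D2 * s^2 + FF D2 * s" using ag[of "Some s"] unfolding gS fS by simp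
  next
    assume "None \<in> {d1, d2, d3}"
    then have "full None" using d by auto
    then show "g A D2 = FF D2" using ag[of None] unfolding dvec_def by simp
  qed
  have "FF (dvec (Some (FF D1 / FF D2))) = 0" unfolding fS C using f2nz by simp
  then show False using vl[of "FF D1 / FF D2"] unfolding dvec_def by simp
qed

end

context S4 begin

lemma part2:
  fixes a1 a2 :: "4 \<Rightarrow> 'a"
  assumes a1: "a1 \<noteq> (\<lambda>_. 0)" and a2: "a2 \<noteq> (\<lambda>_. 0)" and d: "proj_pt a1 \<noteq> proj_pt a2"
    and tc1: "tcount f a1 = 5" and tc2: "tcount f a2 = 5"
  shows "card (rat_points f) \<le> 49"
proof -
  have P1: "\<And>x. x \<noteq> (\<lambda>_. 0) \<Longrightarrow> FF x = 0 \<Longrightarrow> lin a1 x = 0 \<Longrightarrow> lin a2 x = 0 \<Longrightarrow> False"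
    using part1[OF a1 a2 d tc1 tc2] by blast
  have R1: "card (RP a1) = 5" and R2: "card (RP a2) = 5" using RP_TC[OF a1 tc1] RP_TC[OF a2 tc2] by simp_all
  have "RP a1 \<noteq> {}" using R1 by auto
  then obtain x1 where x1: "x1 \<noteq> (\<lambda>_. 0)" "FF x1 = 0" "lin a1 x1 = 0" unfolding RP_def by auto
  have x1n: "lin a2 x1 \<noteq> 0" using P1 x1 by blast
  define e2 where "e2 = (\<lambda>i. inverse (lin a2 x1) * x1 i)"
  have e2: "lin a1 e2 = 0" "lin a2 e2 = 1" unfolding e2_def lin_scale using x1 x1n by simp_all
  have "RP a2 \<noteq> {}" using R2 by auto
  then obtain x2 where x2: "x2 \<noteq> (\<lambda>_. 0)" "FF x2 = 0" "lin a2 x2 = 0" unfolding RP_def by auto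
  have x2n: "lin a1 x2 \<noteq> 0" using P1 x2 by blast
  define e1 where "e1 = (\<lambda>i. inverse (lin a1 x2) * x2 i)"
  have e1: "lin a1 e1 = 1" "lin a2 e1 = 0" unfolding e1_def lin_scale using x2 x2n by simp_all
  define V where "V = {x. lin a1 x = 0 \<and> lin a2 x = 0}"
  have cV: "card V = 16" unfolding V_def by (rule card_V[OF a1 e2])
  have "card (V - {\<lambda>_. 0}) \<ge> 15" using cV by (simp add: card_Diff_singleton_if)
  then have "0 < card (V - {\<lambda>_. 0})" by linarith
  then have "V - {\<lambda>_. 0} \<noteq> {}" using card_gt_0_iff by blast
  then obtain D1 where D1: "D1 \<in> V" "D1 \<noteq> (\<lambda>_. 0)" by auto
  have "card (range (\<lambda>c. (\<lambda>i. c * D1 i))) \<le> 4" using card_image_le[of UNIV "\<lambda>c. (\<lambda>i. c * D1 i)"] card4 by simp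
  moreover have "card V - card (range (\<lambda>c. (\<lambda>i. c * D1 i))) \<le> card (V - range (\<lambda>c. (\<lambda>i. c * D1 i)))"
    by (rule diff_card_le_card_Diff) simp
  ultimately have "0 < card (V - range (\<lambda>c. (\<lambda>i. c * D1 i)))" using cV by linarith
  then have "V - range (\<lambda>c. (\<lambda>i. c * D1 i)) \<noteq> {}" using card_gt_0_iff by blast
  then obtain D2 where D2: "D2 \<in> V" "\<And>c. D2 \<noteq> (\<lambda>i. c * D1 i)" by blast
  have D1V: "lin a1 D1 = 0" "lin a2 D1 = 0" and D2V: "lin a1 D2 = 0" "lin a2 D2 = 0" using D1 D2 unfolding V_def by auto
  have indep: "u = 0 \<and> v = 0" if e: "(\<lambda>i. u * D1 i + v * D2 i) = (\<lambda>_. 0)" for u v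
  proof -
    have ei: "u * D1 i + v * D2 i = 0" for i using fun_cong[OF e, of i] by simp
    have "v = 0"
    proof (rule ccontr)
      assume v: "v \<noteq> 0"
      have "D2 = (\<lambda>i. (u / v) * D1 i)"
      proof
        fix i have "u * D1 i = v * D2 i" using ei[of i] by (simp only: add0_iff)
        then show "D2 i = (u / v) * D1 i" using v by (simp add: field_simps)
      qed
      then show False using D2(2) by blast
    qed
    moreover have "u = 0"
    proof (rule ccontr)
      assume "u \<noteq> 0"
      then have "D1 = (\<lambda>_. 0)" using ei \<open>v = 0\<close> by (simp add: fun_eq_iff)
      then show False using D1(2) by simp
    qed
    ultimately show ?thesis by simp
  qed
  define vv where "vv p = (\<lambda>i. fst p * D1 i + snd p * D2 i)" for p :: "'a \<times> 'a"
  have injv: "inj vv"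
  proof (rule injI)
    fix p q assume e: "vv p = vv q"
    have "(\<lambda>i. (fst p + fst q) * D1 i + (snd p + snd q) * D2 i) = (\<lambda>_. 0)"
    proof
      fix i
      have "vv p i = vv q i" using e by simp
      then have h: "vv p i + vv q i = 0" by (rule eq0)
      show "(fst p + fst q) * D1 i + (snd p + snd q) * D2 i = 0" using h unfolding vv_def by (simp add: algebra_simps)
    qed
    then have "fst p + fst q = 0 \<and> snd p + snd q = 0" by (rule indep)
    then show "p = q" by (simp add: add0_iff prod_eq_iff)
  qed
  have subV: "range vv \<subseteq> V" unfolding V_def vv_def using D1V D2V by (auto simp: lin_add lin_scale)
  have "card (range vv) = 16" using card_image[OF injv] card4 by simp
  then have Vspan: "V = range vv" using card_subset_eq[OF _ subV] cV by simp
  have Vnz: "FF (\<lambda>i. u * D1 i + v * D2 i) \<noteq> 0" if "(u, v) \<noteq> (0, 0)" for u v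
  proof
    assume z: "FF (\<lambda>i. u * D1 i + v * D2 i) = 0"
    have "(\<lambda>i. u * D1 i + v * D2 i) \<noteq> (\<lambda>_. 0)" using indep that by blast
    moreover have "vv (u, v) \<in> V" using subV by blast
    then have "(\<lambda>i. u * D1 i + v * D2 i) \<in> V" unfolding vv_def by simp
    ultimately show False using P1 z unfolding V_def by blast
  qed
  have Zb: "card {x. lin a2 x = 1 \<and> lin a1 x = t \<and> FF x = 0} \<le> 13" for t
  proof -
    define A0 where "A0 = (\<lambda>i. t * e1 i + e2 i)"
    have A0: "lin a1 A0 = t" "lin a2 A0 = 1" unfolding A0_def using e1 e2 by (simp_all add: lin_add lin_scale)
    define vec where "vec p = (\<lambda>i. A0 i + fst p * D1 i + snd p * D2 i)" for p :: "'a \<times> 'a"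
    have sub: "{x. lin a2 x = 1 \<and> lin a1 x = t \<and> FF x = 0} \<subseteq> vec ` {p. FF (vec p) = 0}"
    proof
      fix x assume x: "x \<in> {x. lin a2 x = 1 \<and> lin a1 x = t \<and> FF x = 0}"
      have "(\<lambda>i. x i + A0 i) \<in> V" unfolding V_def using x A0 by (simp add: lin_add)
      then obtain p where p: "(\<lambda>i. x i + A0 i) = vv p" unfolding Vspan by auto
      have "x = vec p"
      proof
        fix i
        have "x i + A0 i = vv p i" using fun_cong[OF p, of i] by simp
        then have h: "(x i + A0 i) + vv p i = 0" by (rule eq0)
        then have "x i = A0 i + vv p i" by (simp only: add.assoc add0_iff)
        then show "x i = vec p i" unfolding vec_def vv_def by (simp add: add.assoc)
      qed
      then show "x \<in> vec ` {p. FF (vec p) = 0}" using x by auto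
    qed
    have "card {x. lin a2 x = 1 \<and> lin a1 x = t \<and> FF x = 0} \<le> card (vec ` {p. FF (vec p) = 0})"
      by (rule card_mono) (simp_all add: sub)
    also have "\<dots> \<le> card {p. FF (vec p) = 0}" by (rule card_image_le) simp
    also have "\<dots> \<le> 13" using plane2[OF Vnz, of A0] unfolding vec_def by simp
    finally show ?thesis .
  qed
  define Zs where "Zs t = {x. lin a2 x = 1 \<and> lin a1 x = t \<and> FF x = 0}" for t
  have cover: "rat_points f \<subseteq> RP a1 \<union> RP a2 \<union> (\<Union>t\<in>{1, om, om+1}. proj_pt ` Zs t)"
  proof
    fix P assume "P \<in> rat_points f"
    then obtain x where x: "P = proj_pt x" "x \<noteq> (\<lambda>_. 0)" "FF x = 0" unfolding rat_points_def by auto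
    show "P \<in> RP a1 \<union> RP a2 \<union> (\<Union>t\<in>{1, om, om+1}. proj_pt ` Zs t)"
    proof (cases "lin a1 x = 0")
      case True
      then have "P \<in> RP a1" using x unfolding RP_def by auto
      then show ?thesis by simp
    next
      case n1: False
      show ?thesis
      proof (cases "lin a2 x = 0")
        case True
        then have "P \<in> RP a2" using x unfolding RP_def by auto
        then show ?thesis by simp
      next
        case n2: False
        define y where "y = (\<lambda>i. inverse (lin a2 x) * x i)"
        have py: "proj_pt y = P" unfolding y_def x(1) by (rule proj_scale) (simp add: n2)
        have ly: "lin a2 y = 1" "lin a1 y = inverse (lin a2 x) * lin a1 x" unfolding y_def lin_scale using n2 by simp_all
        have fy: "FF y = 0" unfolding y_def homF x(3) by simp
        have "inverse (lin a2 x) * lin a1 x \<noteq> 0" using n1 n2 by simp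
        then have tm: "inverse (lin a2 x) * lin a1 x \<in> {1, om, om+1}" using univ4[of "inverse (lin a2 x) * lin a1 x"] by auto
        have "y \<in> Zs (inverse (lin a2 x) * lin a1 x)" unfolding Zs_def using ly fy by simp
        then have "P \<in> proj_pt ` Zs (inverse (lin a2 x) * lin a1 x)" using py by auto
        then show ?thesis using tm by blast
      qed
    qed
  qed
  have "card (rat_points f) \<le> card (RP a1 \<union> RP a2 \<union> (\<Union>t\<in>{1, om, om+1}. proj_pt ` Zs t))"
    by (rule card_mono[OF _ cover]) simp
  also have "\<dots> \<le> card (RP a1 \<union> RP a2) + card (\<Union>t\<in>{1, om, om+1}. proj_pt ` Zs t)" by (rule card_Un_le)
  also have "card (RP a1 \<union> RP a2) \<le> card (RP a1) + card (RP a2)" by (rule card_Un_le)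
  also have "card (\<Union>t\<in>{1, om, om+1}. proj_pt ` Zs t) \<le> (\<Sum>t\<in>{1, om, om+1}. card (proj_pt ` Zs t))"
    by (rule card_UN_le) simp
  also have "\<dots> \<le> (\<Sum>t\<in>{1, om, om+1}. 13)"
  proof (rule sum_mono)
    fix t
    have "card (proj_pt ` Zs t) \<le> card (Zs t)" by (rule card_image_le) simp
    then show "card (proj_pt ` Zs t) \<le> 13" using Zb[of t] unfolding Zs_def by simp
  qed
  also have "\<dots> \<le> 39"
  proof -
    have n: "1 \<noteq> om" "1 \<noteq> om + 1" "om \<noteq> om + 1" using om0 om1 om2 by (auto simp: add0_iff)
    have "card {1, om, om + 1} \<le> 3" using n by simp
    then show ?thesis by simp
  qed
  finally show ?thesis using R1 R2 by simp
qed

end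

lemma exists_om:
  assumes c: "CARD('k::{field,finite}) = 4"
  shows "\<exists>om::'k. om * om = om + 1"
proof -
  have c2: "card ({0, 1} :: 'k set) = 2" by simp
  have "UNIV - ({0, 1} :: 'k set) \<noteq> {}"
  proof
    assume "UNIV - ({0, 1} :: 'k set) = {}"
    then have "UNIV \<subseteq> ({0, 1} :: 'k set)" by blast
    then have "card (UNIV :: 'k set) \<le> card ({0, 1} :: 'k set)" by (rule card_mono[rotated]) simp
    then show False using c c2 by simp
  qed
  then obtain x :: 'k where x: "x \<noteq> 0" "x \<noteq> 1" by blast
  have x3: "x ^ 3 = 1" by (rule field_card4_pow3[OF c x(1)])
  have two: "(1::'k) + 1 = 0" by (rule field_card4_char2[OF c])
  have "(x - 1) * (x * x + x + 1) = x ^ 3 - 1" by (simp add: algebra_simps eval_nat_numeral)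
  also have "\<dots> = 0" using x3 by simp
  finally have "x * x + x + 1 = 0" using x(2) by simp
  then have "x * x + (x + 1) = 0" by (simp add: add.assoc)
  then have "x * x = - (x + 1)" by (rule add_eq_0_iff2[THEN iffD1]) 
  also have "- (x + 1) = x + 1" using two by (metis add_eq_0_iff distrib_left mult.right_neutral mult_zero_right)
  finally show ?thesis by blast
qed

theorem mainTheorem6:
  fixes f :: "'k::{field,finite} mpoly4" and a1 a2 :: "4 \<Rightarrow> 'k"
  assumes "CARD('k) = 4"
    and "f \<noteq> 0" and "homogeneous_of_degree f 4"
    and "Factorial_Ring.irreducible f"
    and "\<not> contains_rat_line f"
    and "\<forall>x. x \<noteq> (\<lambda>_. 0) \<and> eval4 f x = 0 \<longrightarrow> nonsingular_at f x"
    and "a1 \<noteq> (\<lambda>_. 0)" and "a2 \<noteq> (\<lambda>_. 0)" and "proj_pt a1 \<noteq> proj_pt a2"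
    and "tcount f a1 = 5" and "tcount f a2 = 5"
  shows "\<not> (\<exists>x. x \<noteq> (\<lambda>_. 0) \<and> eval4 f x = 0 \<and> lin a1 x = 0 \<and> lin a2 x = 0)
         \<and> card (rat_points f) \<le> 49"
proof -
  obtain om :: 'k where om: "om * om = om + 1" using exists_om[OF assms(1)] by blast
  interpret S: S4 om f
    by unfold_locales (use assms om in auto)
  show ?thesis
    using S.part1[OF assms(7-11)] S.part2[OF assms(7-11)] by blast
qed

end
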